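(* There is a constant $C>0$ such that for all $n\ge 2$ and $k\ge1$: if $\mathbf M\in\mathrm{GL}(n,2)$ equals a product $\mathbf M_{\mathcal T_k}\cdots\mathbf M_{\mathcal T_1}$ of $k$ CNOT-tree matrices, each on $n$ qubits, then $\mathbf M$ is a product of at most $Ck\log^2 n$ parallel row-elimination matrices. That is, the circuit can be parallelized to depth $O(k\log^2 n)$ without ancillae.
   Context: $\mathsf R(i,j)=\mathbf I+\mathbf 1_{j,i}$ over $\mathbb F_2$, where $\mathbf 1_{j,i}$ is the matrix with a single $1$ in entry $(j,i)$. A parallel row-elimination matrix is $\mathbf I$ or $\mathbf I+\sum_{k=1}^t\mathbf 1_{j_k,i_k}$, where the $2t$ indices $i_k,j_k$ are pairwise distinct. A CNOT-tree matrix $\mathbf M_{\mathcal T}$ is defined for a proper binary tree $\mathcal T$ with $n$ leaves carrying distinct labels from $[n]$ and internal nodes labeled $L$ or $R$. Each node $v$ receives a qubit index $i(v)$, and each internal node $v$ a matrix $\mathbf M_v$, as follows. Write $c_L,c_R$ for the left and right children of $v$. - If $v$ is a leaf, $i(v)$ is its label. - If $v$ is internal with label $L$, then $i(v)=i(c_L)$ and $\mathbf M_v=\mathsf R(i(c_R),i(c_L))$. - If $v$ is internal with label $R$, then $i(v)=i(c_R)$ and $\mathbf M_v=\mathsf R(i(c_L),i(c_R))$. Then $\mathbf M_{\mathcal T}=\mathbf M_{v_{n-1}}\cdots\mathbf M_{v_1}$, where $v_1,\dots,v_{n-1}$ are the internal nodes in postorder. *)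

theory Defs
  imports "Jordan_Normal_Form.Matrix" "HOL-Library.Z2"
begin

text \<open>Matrices over F2 = type bit, of dimension n x n (Jordan_Normal_Form matrices).
  Qubits are indexed 0..n-1 (the paper's [n] shifted by one).\<close>

definition E1 :: "nat \<Rightarrow> nat \<Rightarrow> nat \<Rightarrow> bit mat" where
  "E1 n j i = mat n n (\<lambda>(a,b). if a = j \<and> b = i then 1 else 0)"

definition Rmat :: "nat \<Rightarrow> nat \<Rightarrow> nat \<Rightarrow> bit mat" where
  "Rmat n i j = 1\<^sub>m n + E1 n j i"

definition par_elim :: "nat \<Rightarrow> bit mat \<Rightarrow> bool" where
  "par_elim n P \<longleftrightarrow> (\<exists>ps :: (nat \<times> nat) list.
      distinct (concat (map (\<lambda>(i,j). [i,j]) ps)) \<and>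
      (\<forall>(i,j)\<in>set ps. i < n \<and> j < n) \<and>
      P = foldr (\<lambda>(i,j) A. A + E1 n j i) ps (1\<^sub>m n))"

datatype lab = L | R

datatype ctree = Leaf nat | Node lab ctree ctree

fun leaves :: "ctree \<Rightarrow> nat list" where
  "leaves (Leaf a) = [a]"
| "leaves (Node d l r) = leaves l @ leaves r"

fun qidx :: "ctree \<Rightarrow> nat" where
  "qidx (Leaf a) = a"
| "qidx (Node L l r) = qidx l"
| "qidx (Node R l r) = qidx r"

fun node_mats :: "nat \<Rightarrow> ctree \<Rightarrow> bit mat list" where
  "node_mats n (Leaf a) = []"
| "node_mats n (Node L l r) = node_mats n l @ node_mats n r @ [Rmat n (qidx r) (qidx l)]"
| "node_mats n (Node R l r) = node_mats n l @ node_mats n r @ [Rmat n (qidx l) (qidx r)]"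

definition mat_prod :: "nat \<Rightarrow> bit mat list \<Rightarrow> bit mat" where
  "mat_prod n Ms = foldr (*) Ms (1\<^sub>m n)"

text \<open>M_T = M_{v_{n-1}} ... M_{v_1} with v_1,...,v_{n-1} the postorder.\<close>
definition tree_mat :: "nat \<Rightarrow> ctree \<Rightarrow> bit mat" where
  "tree_mat n T = mat_prod n (rev (node_mats n T))"

definition cnot_tree :: "nat \<Rightarrow> ctree \<Rightarrow> bool" where
  "cnot_tree n T \<longleftrightarrow> length (leaves T) = n \<and> distinct (leaves T) \<and> set (leaves T) \<subseteq> {..<n}"

end

theory Submission
  imports Defs "HOL-Library.Multiset"
begin


definition gt :: "nat \<times> nat \<Rightarrow> (nat \<Rightarrow> 'a::ab_group_add) \<Rightarrow> nat \<Rightarrow> 'a" where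
  "gt p s = (case p of (i,j) \<Rightarrow> s(j := s j + s i))"

definition gates :: "(nat \<times> nat) list \<Rightarrow> (nat \<Rightarrow> 'a::ab_group_add) \<Rightarrow> nat \<Rightarrow> 'a" where
  "gates G = fold gt G"

lemma gates_Nil[simp]: "gates [] s = s" by (simp add: gates_def)
lemma gates_Cons[simp]: "gates (p # G) s = gates G (gt p s)" by (simp add: gates_def)
lemma gates_append[simp]: "gates (G @ H) s = gates H (gates G s)" by (simp add: gates_def)

definition qset :: "(nat \<times> nat) list \<Rightarrow> nat set" where
  "qset G = (\<Union>(i,j)\<in>set G. {i,j})"

lemma qset_simps[simp]: "qset [] = {}" "qset ((i,j)#G) = insert i (insert j (qset G))"
  "qset (G @ H) = qset G \<union> qset H"
  by (auto simp: qset_def)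

definition cok :: "(nat \<times> nat) list \<Rightarrow> (nat \<times> nat) list \<Rightarrow> bool" where
  "cok X Y \<longleftrightarrow> (\<forall>(a,b)\<in>set X. \<forall>(c,d)\<in>set Y. a \<noteq> d \<and> c \<noteq> b)"

lemma gt_comm: "a \<noteq> d \<Longrightarrow> c \<noteq> b \<Longrightarrow> gt (a,b) (gt (c,d) s) = gt (c,d) (gt (a,b) s)"
  by (auto simp: gt_def fun_eq_iff algebra_simps)

lemma gates_gt_comm: "\<forall>(c,d)\<in>set Y. a \<noteq> d \<and> c \<noteq> b \<Longrightarrow> gates Y (gt (a,b) s) = gt (a,b) (gates Y s)"
proof (induction Y arbitrary: s)
  case Nil then show ?case by simp
next
  case (Cons p Y) then obtain c d where p: "p = (c,d)" by (cases p)
  with Cons show ?case by (simp add: gt_comm)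
qed

lemma gates_comm: "cok X Y \<Longrightarrow> gates Y (gates X s) = gates X (gates Y s)"
proof (induction X arbitrary: s)
  case Nil then show ?case by simp
next
  case (Cons p X) then obtain a b where p: "p = (a,b)" by (cases p)
  from Cons.prems have c1: "cok X Y" by (auto simp: cok_def)
  from Cons.prems p have c2: "\<forall>(c,d)\<in>set Y. a \<noteq> d \<and> c \<noteq> b" by (auto simp: cok_def)
  have "gates Y (gates X (gt (a,b) s)) = gates X (gates Y (gt (a,b) s))" by (rule Cons.IH[OF c1])
  also have "... = gates X (gt (a,b) (gates Y s))" by (subst gates_gt_comm[OF c2]) (rule refl)
  finally show ?case using p by simp
qed

lemma cok_disj: assumes "qset X \<inter> qset Y = {}" shows "cok X Y"
  unfolding cok_def
proof (clarify)
  fix a b c d assume "(a,b) \<in> set X" "(c,d) \<in> set Y"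
  then have "a \<in> qset X" "b \<in> qset X" "c \<in> qset Y" "d \<in> qset Y" by (auto simp: qset_def)
  then show "a \<noteq> d \<and> c \<noteq> b" using assms by blast
qed

definition lq :: "(nat \<times> nat) list \<Rightarrow> nat list" where
  "lq l = concat (map (\<lambda>(i,j). [i,j]) l)"

lemma set_lq: "set (lq l) = qset l" by (auto simp: lq_def qset_def)

lemma lq_simps[simp]: "lq [] = []" "lq ((i,j)#l) = i # j # lq l" "lq (l @ l') = lq l @ lq l'"
  by (auto simp: lq_def)

lemma layer_formula:
  assumes "distinct (lq l)"
  shows "gates l s q = s q + sum_list (map (\<lambda>(i,j). if j = q then s i else 0) l)"
  using assms
proof (induction l arbitrary: s)
  case Nil then show ?case by simp
next
  case (Cons p l)
  obtain i j where p: "p = (i,j)" by (cases p)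
  have d: "distinct (lq l)" using Cons.prems p by simp
  have nj: "\<forall>(i',j')\<in>set l. i' \<noteq> j \<and> i' \<noteq> i" using Cons.prems p
    by (auto simp: set_lq[symmetric] lq_def)
  have "sum_list (map (\<lambda>(i',j'). if j' = q then gt (i,j) s i' else 0) l)
      = sum_list (map (\<lambda>(i',j'). if j' = q then s i' else 0) l)"
    by (rule arg_cong[where f=sum_list], rule map_cong) (use nj in \<open>auto simp: gt_def\<close>)
  moreover have "gt (i,j) s q = s q + (if j = q then s i else 0)" by (simp add: gt_def)
  ultimately have "gates l (gt (i,j) s) q = s q + ((if j = q then s i else 0) +
      sum_list (map (\<lambda>(i',j'). if j' = q then s i' else 0) l))"
    using Cons.IH[OF d, of "gt (i,j) s"] by (simp only: add.assoc)
  then show ?case using p by simp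
qed

lemma gates_rev_layer: "distinct (lq l) \<Longrightarrow> gates (rev l) s = gates l s"
proof (induction l arbitrary: s)
  case Nil then show ?case by simp
next
  case (Cons p l)
  obtain i j where p: "p = (i,j)" by (cases p)
  have d: "distinct (lq l)" using Cons.prems p by simp
  have c: "cok [p] (rev l)" using Cons.prems p by (auto simp: cok_def set_lq[symmetric] lq_def)
  have "gates (rev (p # l)) s = gt p (gates (rev l) s)" by simp
  also have "... = gates (rev l) (gt p s)" using gates_comm[OF c, of s] by simp
  also have "... = gates l (gt p s)" by (rule Cons.IH[OF d])
  finally show ?case by simp
qed

definition cq :: "(nat \<times> nat) list list \<Rightarrow> nat set" where
  "cq C = (\<Union>l\<in>set C. qset l)"

lemma cq_simps[simp]: "cq [] = {}" "cq (l # C) = qset l \<union> cq C" "cq (C @ D) = cq C \<union> cq D"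
  by (auto simp: cq_def)

lemma qset_concat[simp]: "qset (concat C) = cq C"
  by (induction C) auto

definition lay_ok :: "nat \<Rightarrow> (nat \<times> nat) list \<Rightarrow> bool" where
  "lay_ok n l \<longleftrightarrow> distinct (lq l) \<and> qset l \<subseteq> {..<n}"

fun zl :: "(nat \<times> nat) list list \<Rightarrow> (nat \<times> nat) list list \<Rightarrow> (nat \<times> nat) list list" where
  "zl [] B = B"
| "zl A [] = A"
| "zl (a # A) (b # B) = (a @ b) # zl A B"

lemma zl_cq[simp]: "cq (zl A B) = cq A \<union> cq B"
  by (induction A B rule: zl.induct) auto

lemma zl_length[simp]: "length (zl A B) = max (length A) (length B)"
  by (induction A B rule: zl.induct) auto

lemma zl_sem: "cq A \<inter> cq B = {} \<Longrightarrow> gates (concat (zl A B)) s = gates (concat B) (gates (concat A) s)"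
proof (induction A B arbitrary: s rule: zl.induct)
  case (1 B) then show ?case by simp
next
  case (2 a A) then show ?case by simp
next
  case (3 a A b B)
  have d: "cq A \<inter> cq B = {}" using 3(2) by auto
  have c: "cok b (concat A)" by (rule cok_disj) (use 3(2) in auto)
  have "gates (concat (zl (a # A) (b # B))) s = gates (concat (zl A B)) (gates b (gates a s))" by simp
  also have "... = gates (concat B) (gates (concat A) (gates b (gates a s)))" by (rule 3(1)[OF d])
  also have "... = gates (concat B) (gates b (gates (concat A) (gates a s)))"
    by (subst gates_comm[OF c]) (rule refl)
  finally show ?case by simp
qed

lemma zl_ok: "\<forall>l\<in>set A. lay_ok n l \<Longrightarrow> \<forall>l\<in>set B. lay_ok n l \<Longrightarrow> cq A \<inter> cq B = {} \<Longrightarrow>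
   \<forall>l\<in>set (zl A B). lay_ok n l"
proof (induction A B rule: zl.induct)
  case (3 a A b B)
  have "lay_ok n a" "lay_ok n b" "qset a \<inter> qset b = {}" using 3(2-4) by auto
  then have "lay_ok n (a @ b)" unfolding lay_ok_def by (auto simp: set_lq)
  moreover have "\<forall>l\<in>set (zl A B). lay_ok n l" by (rule 3(1)) (use 3(2-4) in auto)
  ultimately show ?case by simp
qed auto

fun pdisj :: "nat set list \<Rightarrow> bool" where
  "pdisj [] = True"
| "pdisj (A # As) = (A \<inter> \<Union>(set As) = {} \<and> pdisj As)"

definition parl :: "(nat \<times> nat) list list list \<Rightarrow> (nat \<times> nat) list list" where
  "parl Cs = foldr zl Cs []"

lemma parl_simps[simp]: "parl [] = []" "parl (C # Cs) = zl C (parl Cs)"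
  by (auto simp: parl_def)

lemma parl_cq[simp]: "cq (parl Cs) = (\<Union>C\<in>set Cs. cq C)"
  by (induction Cs) auto

lemma parl_sem: "pdisj (map cq Cs) \<Longrightarrow> gates (concat (parl Cs)) s = gates (concat (concat Cs)) s"
proof (induction Cs arbitrary: s)
  case Nil then show ?case by simp
next
  case (Cons C Cs)
  have d: "cq C \<inter> cq (parl Cs) = {}" using Cons.prems by auto
  have "gates (concat (parl (C # Cs))) s = gates (concat (parl Cs)) (gates (concat C) s)"
    using zl_sem[OF d] by simp
  also have "... = gates (concat (concat Cs)) (gates (concat C) s)"
    using Cons.IH Cons.prems by simp
  finally show ?case by simp
qed

lemma parl_ok: "pdisj (map cq Cs) \<Longrightarrow> \<forall>C\<in>set Cs. \<forall>l\<in>set C. lay_ok n l \<Longrightarrow> \<forall>l\<in>set (parl Cs). lay_ok n l"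
proof (induction Cs)
  case Nil then show ?case by simp
next
  case (Cons C Cs)
  have d: "cq C \<inter> cq (parl Cs) = {}" using Cons.prems by auto
  have a: "\<forall>l\<in>set C. lay_ok n l" using Cons.prems(2) by simp
  have b: "\<forall>l\<in>set (parl Cs). lay_ok n l" using Cons.IH Cons.prems by simp
  show ?case using zl_ok[OF a b d] by simp
qed

lemma parl_length: "\<forall>C\<in>set Cs. length C \<le> b \<Longrightarrow> length (parl Cs) \<le> b"
  by (induction Cs) auto

lemma sum_list_zero: "\<forall>x\<in>set l. g x = (0::'a::monoid_add) \<Longrightarrow> sum_list (map g l) = 0"
  by (induction l) auto

lemma layer_sum: "distinct (lq l) \<Longrightarrow> gates l s q = s q + (\<Sum>(i,j)\<leftarrow>l. if j = q then s i else 0)"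
  by (rule layer_formula)

lemma layer_src: assumes "distinct (lq l)" "(i,j) \<in> set l" shows "gates l s i = s i"
proof -
  have "\<forall>(i',j')\<in>set l. j' \<noteq> i"
  proof (clarify)
    fix i' assume "(i',i) \<in> set l"
    with assms show False
    proof (induction l)
      case (Cons p l) then show ?case by (cases p) (auto simp: set_lq[symmetric] lq_def)
    qed simp
  qed
  then have "(\<Sum>(i',j')\<leftarrow>l. if j' = i then s i' else 0) = 0"
    by (intro sum_list_zero) auto
  then show ?thesis using layer_sum[OF assms(1), of s i] by simp
qed

lemma layer_invol: assumes "distinct (lq l)" "\<forall>x::'a. x + x = 0"
  shows "gates l (gates l s) = (s :: nat \<Rightarrow> 'a::ab_group_add)"
proof
  fix q
  have e: "(\<Sum>(i,j)\<leftarrow>l. if j = q then gates l s i else 0) = (\<Sum>(i,j)\<leftarrow>l. if j = q then s i else 0)"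
    by (intro arg_cong[where f=sum_list] map_cong) (auto simp: layer_src[OF assms(1)])
  have "gates l (gates l s) q = s q + ((\<Sum>(i,j)\<leftarrow>l. if j = q then s i else 0) + (\<Sum>(i,j)\<leftarrow>l. if j = q then s i else 0))"
    using layer_sum[OF assms(1), of "gates l s" q] layer_sum[OF assms(1), of s q] e
    by (simp add: add.assoc)
  then show "gates l (gates l s) q = s q" using assms(2) by simp
qed

lemma layer_upd: assumes "distinct (lq l)" "t \<notin> qset l"
  shows "gates l (s(t := v)) = (gates l s)(t := v)"
proof
  fix q
  have e: "(\<Sum>(i,j)\<leftarrow>l. if j = q then (s(t:=v)) i else 0) = (\<Sum>(i,j)\<leftarrow>l. if j = q then s i else 0)"
    by (intro arg_cong[where f=sum_list] map_cong) (use assms(2) in \<open>auto simp: qset_def\<close>)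
  have e2: "t = q \<Longrightarrow> (\<Sum>(i,j)\<leftarrow>l. if j = q then s i else 0) = 0"
    by (intro sum_list_zero) (use assms(2) in \<open>auto simp: qset_def\<close>)
  show "gates l (s(t := v)) q = ((gates l s)(t := v)) q"
    using layer_sum[OF assms(1), of "s(t:=v)" q] layer_sum[OF assms(1), of s q] e e2 by auto
qed

lemma lq_map: "lq (map (\<lambda>j. (a j, b j)) xs) = concat (map (\<lambda>j. [a j, b j]) xs)"
  by (induction xs) auto

lemma qset_map: "qset (map (\<lambda>j. (a j, b j)) xs) = a ` set xs \<union> b ` set xs"
  by (auto simp: qset_def)

lemma pairs_distinct:
  assumes "inj_on u {..<k}" "inj_on v {..<k}" "\<forall>j<k. \<forall>j'<k. u j \<noteq> v j'"
  shows "distinct (concat (map (\<lambda>j. [u j, v j]) [0..<k]))"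
  using assms
proof (induction k)
  case 0 then show ?case by simp
next
  case (Suc k)
  have sub: "{..<k} \<subseteq> {..<Suc k}" by auto
  have i1: "inj_on u {..<k}" "inj_on v {..<k}"
    by (rule inj_on_subset[OF Suc.prems(1) sub], rule inj_on_subset[OF Suc.prems(2) sub])
  have d: "distinct (concat (map (\<lambda>j. [u j, v j]) [0..<k]))" using Suc.IH[OF i1] Suc.prems(3) by auto
  have "u k \<notin> u ` {..<k}"
  proof
    assume "u k \<in> u ` {..<k}" then obtain x where "x < k" "u k = u x" by auto
    then show False using Suc.prems(1) unfolding inj_on_def by (metis lessThan_iff less_Suc_eq less_irrefl)
  qed
  moreover have "v k \<notin> v ` {..<k}"
  proof
    assume "v k \<in> v ` {..<k}" then obtain x where "x < k" "v k = v x" by auto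
    then show False using Suc.prems(2) unfolding inj_on_def by (metis lessThan_iff less_Suc_eq less_irrefl)
  qed
  moreover have "u k \<notin> v ` {..<k}" "v k \<notin> u ` {..<k}" "u k \<noteq> v k" using Suc.prems(3)
    by (auto, metis less_Suc_eq)
  ultimately show ?case using d by auto
qed

lemma sum_list_map_upt: "sum_list (map g [0..<k]) = (\<Sum>j<k. g j)"
  by (simp add: sum_list_map_eq_sum_count atLeast0LessThan[symmetric] sum_set_upt_conv_sum_list_nat[symmetric])

lemma sum_even: "(\<Sum>k<2*q. (g::nat \<Rightarrow> 'a::comm_monoid_add) k) = (\<Sum>k<q. g (2*k) + g (2*k+1))"
  by (induction q) (auto simp: add.assoc)

lemma sum_split2: "(\<Sum>k<m. (g::nat \<Rightarrow> 'a::comm_monoid_add) k) =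
   (\<Sum>k<(m+1) div 2. g (2*k) + (if 2*k+1 < m then g (2*k+1) else 0))"
proof (cases "even m")
  case True then obtain q where m: "m = 2*q" by auto
  have "(m+1) div 2 = q" using m by simp
  moreover have "\<And>k. k < q \<Longrightarrow> 2*k+1 < m" using m by simp
  ultimately show ?thesis using m by (simp add: sum_even)
next
  case False then obtain q where m: "m = 2*q+1" using oddE by blast
  have "(m+1) div 2 = Suc q" using m by simp
  moreover have "\<And>k. k < q \<Longrightarrow> 2*k+1 < m" using m by simp
  ultimately show ?thesis using m by (simp add: sum_even)
qed

function fi :: "nat \<Rightarrow> (nat \<Rightarrow> nat) \<Rightarrow> nat \<Rightarrow> (nat \<times> nat) list list" where
 "fi t f m = (if m = 0 then [] else if m = 1 then [[(f 0, t)]] else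
    [map (\<lambda>j. (f (2*j+1), f (2*j))) [0..<m div 2]] @ fi t (\<lambda>j. f (2*j)) ((m+1) div 2) @
    [map (\<lambda>j. (f (2*j+1), f (2*j))) [0..<m div 2]])"
  by pat_completeness auto
termination by (relation "measure (\<lambda>(t,f,m). m)") auto

declare fi.simps[simp del]

lemma fi_sem:
  assumes "\<forall>x::'a. x + x = 0" "inj_on f {..<m}" "t \<notin> f ` {..<m}"
  shows "gates (concat (fi t f m)) s = (s :: nat \<Rightarrow> 'a::ab_group_add)(t := s t + (\<Sum>k<m. s (f k)))"
  using assms(2,3)
proof (induction t f m arbitrary: s rule: fi.induct)
  case (1 t f m)
  show ?case
  proof (cases "m \<le> 1")
    case True
    then consider "m = 0" | "m = 1" by linarith
    then show ?thesis
    proof cases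
      case 1 then show ?thesis by (simp add: fi.simps)
    next
      case 2
      then have "t \<noteq> f 0" using "1.prems" by auto
      then show ?thesis using 2 by (simp add: fi.simps gt_def fun_eq_iff add.commute)
    qed
  next
    case False
    define k where "k = m div 2"
    define Ly where "Ly = map (\<lambda>j. (f (2*j+1), f (2*j))) [0..<k]"
    have fi_eq: "fi t f m = [Ly] @ fi t (\<lambda>j. f (2*j)) ((m+1) div 2) @ [Ly]"
      using False by (subst fi.simps) (simp add: Ly_def k_def)
    have inj: "\<And>a b. a < m \<Longrightarrow> b < m \<Longrightarrow> f a = f b \<longleftrightarrow> a = b"
      using "1.prems"(1) by (auto simp: inj_on_def)
    have dL: "distinct (lq Ly)" unfolding Ly_def lq_map
      by (rule pairs_distinct) (auto simp: inj_on_def k_def inj, presburger)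
    have tL: "t \<notin> qset Ly" using "1.prems"(2) by (auto simp: Ly_def qset_map k_def)
    define s1 where "s1 = gates Ly s"
    have s1: "\<And>q. s1 q = s q + (\<Sum>j<k. if f (2*j) = q then s (f (Suc (2*j))) else 0)"
    proof -
      fix q show "s1 q = s q + (\<Sum>j<k. if f (2*j) = q then s (f (Suc (2*j))) else 0)"
        using layer_sum[OF dL, of s q] by (simp add: s1_def Ly_def sum_list_map_upt)
    qed
    have "(\<Sum>j<k. if f (2*j) = t then s (f (Suc (2*j))) else 0) = 0"
    proof (rule sum.neutral)
      have "f (2*j) \<noteq> t" if "j \<in> {..<k}" for j
      proof -
        have "2*j < m" using that by (auto simp: k_def)
        then have "f (2*j) \<in> f ` {..<m}" by auto
        then show ?thesis using "1.prems"(2) by auto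
      qed
      then show "\<forall>j\<in>{..<k}. (if f (2*j) = t then s (f (Suc (2*j))) else 0) = 0" by auto
    qed
    then have s1t: "s1 t = s t" using s1[of t] by simp
    have s1e: "\<And>j. j < (m+1) div 2 \<Longrightarrow> s1 (f (2*j)) = s (f (2*j)) + (if 2*j+1 < m then s (f (2*j+1)) else 0)"
    proof -
      fix j assume j: "j < (m+1) div 2"
      have "(\<Sum>i<k. if f (2*i) = f (2*j) then s (f (Suc (2*i))) else 0) = (\<Sum>i<k. if i = j then s (f (Suc (2*i))) else 0)"
        by (rule sum.cong) (use j in \<open>auto simp: k_def inj\<close>)
      also have "... = (if 2*j+1 < m then s (f (2*j+1)) else 0)" using j by (auto simp: k_def)
      finally show "s1 (f (2*j)) = s (f (2*j)) + (if 2*j+1 < m then s (f (2*j+1)) else 0)" using s1 by simp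
    qed
    have sumeq: "(\<Sum>j<(m+1) div 2. s1 (f (2*j))) = (\<Sum>j<m. s (f j))"
    proof -
      have "(\<Sum>j<(m+1) div 2. s1 (f (2*j))) = (\<Sum>j<(m+1) div 2. s (f (2*j)) + (if 2*j+1 < m then s (f (2*j+1)) else 0))"
        by (rule sum.cong[OF refl], rule s1e) simp
      also have "... = (\<Sum>j<m. s (f j))" by (rule sum_split2[symmetric])
      finally show ?thesis .
    qed
    have pi: "inj_on (\<lambda>j. f (2*j)) {..<(m+1) div 2}" by (auto simp: inj_on_def inj)
    have pt: "t \<notin> (\<lambda>j. f (2*j)) ` {..<(m+1) div 2}" using "1.prems"(2) by auto
    have IH: "gates (concat (fi t (\<lambda>j. f (2*j)) ((m+1) div 2))) s1 =
       s1(t := s1 t + (\<Sum>j<(m+1) div 2. s1 (f (2*j))))"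
      using "1.IH" False pi pt by (simp add: fun_upd_def)
    have "gates (concat (fi t f m)) s = gates Ly (gates (concat (fi t (\<lambda>j. f (2*j)) ((m+1) div 2))) s1)"
      by (simp add: fi_eq s1_def)
    also have "... = gates Ly (s1(t := s t + (\<Sum>j<m. s (f j))))" using IH s1t sumeq by simp
    also have "... = (gates Ly s1)(t := s t + (\<Sum>j<m. s (f j)))" by (rule layer_upd[OF dL tL])
    also have "gates Ly s1 = s" unfolding s1_def by (rule layer_invol[OF dL assms(1)])
    finally show ?thesis .
  qed
qed

function pc :: "(nat \<Rightarrow> nat) \<Rightarrow> nat \<Rightarrow> (nat \<times> nat) list list" where
 "pc f m = (if m \<le> 1 then [] else
    [map (\<lambda>j. (f (2*j), f (Suc (2*j)))) [0..<m div 2]] @ pc (\<lambda>j. f (Suc (2*j))) (m div 2) @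
    [map (\<lambda>j. (f (Suc (2*j)), f (Suc (Suc (2*j))))) [0..<(m - 1) div 2]])"
  by pat_completeness auto
termination by (relation "measure (\<lambda>(f,m). m)") auto

declare pc.simps[simp del]

definition isP :: "(nat \<Rightarrow> nat) \<Rightarrow> nat \<Rightarrow> (nat \<Rightarrow> 'a::comm_monoid_add) \<Rightarrow> (nat \<Rightarrow> 'a) \<Rightarrow> bool" where
  "isP f m s Rr \<longleftrightarrow> (\<forall>i<m. Rr (f i) = (\<Sum>k<Suc i. s (f k))) \<and> (\<forall>q. q \<notin> f ` {..<m} \<longrightarrow> Rr q = s q)"

lemma isP_unique: "isP f m s R1 \<Longrightarrow> isP f m s R2 \<Longrightarrow> R1 = R2"
proof
  fix q assume a: "isP f m s R1" "isP f m s R2"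
  show "R1 q = R2 q"
  proof (cases "q \<in> f ` {..<m}")
    case True then obtain i where "i < m" "q = f i" by auto
    then show ?thesis using a unfolding isP_def by simp
  next
    case False then show ?thesis using a unfolding isP_def by simp
  qed
qed

lemma pc_sem:
  assumes "inj_on f {..<m}"
  shows "isP f m s (gates (concat (pc f m)) (s :: nat \<Rightarrow> 'a::ab_group_add))"
  using assms
proof (induction f m arbitrary: s rule: pc.induct)
  case (1 f m)
  have inj: "\<And>a b. a < m \<Longrightarrow> b < m \<Longrightarrow> f a = f b \<longleftrightarrow> a = b"
    using "1.prems"(1) by (auto simp: inj_on_def)
  show ?case
  proof (cases "m \<le> 1")
    case True
    then have "pc f m = []" by (simp add: pc.simps)
    moreover have "(\<Sum>k<i. s (f k)) = 0" if "i < m" for i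
    proof -
      have "i = 0" using True that by auto
      then show ?thesis by simp
    qed
    ultimately show ?thesis by (auto simp: isP_def)
  next
    case False
    define k where "k = m div 2"
    define k2 where "k2 = (m - 1) div 2"
    define P where "P = map (\<lambda>j. (f (2*j), f (Suc (2*j)))) [0..<k]"
    define Q where "Q = map (\<lambda>j. (f (Suc (2*j)), f (Suc (Suc (2*j))))) [0..<k2]"
    define g where "g = (\<lambda>j. f (Suc (2*j)))"
    have pc_eq: "pc f m = [P] @ pc g k @ [Q]"
      using False by (subst pc.simps) (simp add: P_def Q_def k_def k2_def g_def)
    have dP: "distinct (lq P)" unfolding P_def lq_map
      by (rule pairs_distinct) (auto simp: inj_on_def k_def inj, presburger)
    have dQ: "distinct (lq Q)" unfolding Q_def lq_map
      by (rule pairs_distinct) (auto simp: inj_on_def k2_def inj, presburger)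
    define s1 where "s1 = gates P s"
    have s1: "\<And>q. s1 q = s q + (\<Sum>j<k. if f (Suc (2*j)) = q then s (f (2*j)) else 0)"
    proof -
      fix q show "s1 q = s q + (\<Sum>j<k. if f (Suc (2*j)) = q then s (f (2*j)) else 0)"
        using layer_sum[OF dP, of s q] by (simp add: s1_def P_def sum_list_map_upt)
    qed
    have s1o: "s1 (f (Suc (2*j))) = s (f (2*j)) + s (f (Suc (2*j)))" if "j < k" for j
    proof -
      have "(\<Sum>i<k. if f (Suc (2*i)) = f (Suc (2*j)) then s (f (2*i)) else 0) = (\<Sum>i<k. if i = j then s (f (2*i)) else 0)"
        by (rule sum.cong[OF refl]) (use that in \<open>auto simp: k_def inj\<close>)
      also have "... = s (f (2*j))" using that by simp
      finally show ?thesis using s1 by (simp add: add.commute)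
    qed
    have s1n: "s1 q = s q" if "q \<notin> g ` {..<k}" for q
    proof -
      have "(\<Sum>j<k. if f (Suc (2*j)) = q then s (f (2*j)) else 0) = 0"
        by (rule sum.neutral) (use that in \<open>auto simp: g_def\<close>)
      then show ?thesis using s1 by simp
    qed
    have ginj: "inj_on g {..<k}" by (auto simp: inj_on_def g_def k_def inj)
    define s2 where "s2 = gates (concat (pc g k)) s1"
    have IH: "isP g k s1 s2" unfolding s2_def using "1.IH" False ginj by (simp add: k_def g_def)
    define s3 where "s3 = gates Q s2"
    have s3: "\<And>q. s3 q = s2 q + (\<Sum>j<k2. if f (Suc (Suc (2*j))) = q then s2 (f (Suc (2*j))) else 0)"
    proof -
      fix q show "s3 q = s2 q + (\<Sum>j<k2. if f (Suc (Suc (2*j))) = q then s2 (f (Suc (2*j))) else 0)"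
        using layer_sum[OF dQ, of s2 q] by (simp add: s3_def Q_def sum_list_map_upt)
    qed
    have s3n: "s3 q = s2 q" if "q \<notin> (\<lambda>j. f (Suc (Suc (2*j)))) ` {..<k2}" for q
    proof -
      have "(\<Sum>j<k2. if f (Suc (Suc (2*j))) = q then s2 (f (Suc (2*j))) else 0) = 0"
        by (rule sum.neutral) (use that in auto)
      then show ?thesis using s3 by simp
    qed
    have s3e: "s3 (f (Suc (Suc (2*j)))) = s2 (f (Suc (Suc (2*j)))) + s2 (f (Suc (2*j)))" if "j < k2" for j
    proof -
      have "(\<Sum>i<k2. if f (Suc (Suc (2*i))) = f (Suc (Suc (2*j))) then s2 (f (Suc (2*i))) else 0)
          = (\<Sum>i<k2. if i = j then s2 (f (Suc (2*i))) else 0)"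
        by (rule sum.cong[OF refl]) (use that in \<open>auto simp: k2_def inj\<close>)
      also have "... = s2 (f (Suc (2*j)))" using that by simp
      finally show ?thesis using s3 by simp
    qed
    have sum_odd: "(\<Sum>i<Suc j. s1 (g i)) = (\<Sum>i<2*j+2. s (f i))" if "j < k" for j
    proof -
      have "(\<Sum>i<Suc j. s1 (g i)) = (\<Sum>i<Suc j. s (f (2*i)) + s (f (2*i+1)))"
        by (rule sum.cong[OF refl]) (use that s1o in \<open>auto simp: g_def\<close>)
      also have "... = (\<Sum>i<2*(Suc j). s (f i))" by (rule sum_even[symmetric])
      finally show ?thesis by simp
    qed
    have res: "gates (concat (pc f m)) s = s3" by (simp add: pc_eq s1_def s2_def s3_def)
    have hg: "f a \<notin> g ` {..<k}" if "a < m" "even a" for a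
    proof
      assume "f a \<in> g ` {..<k}"
      then obtain j where j: "j < k" "f a = f (Suc (2*j))" by (auto simp: g_def)
      then have "Suc (2*j) < m" by (simp add: k_def)
      then have "a = Suc (2*j)" using inj[OF that(1), of "Suc (2*j)"] j(2) by simp
      then show False using that(2) by simp
    qed
    have hq: "f a \<notin> (\<lambda>j. f (Suc (Suc (2*j)))) ` {..<k2}" if "a < m" "a = 0 \<or> odd a" for a
    proof
      assume "f a \<in> (\<lambda>j. f (Suc (Suc (2*j)))) ` {..<k2}"
      then obtain j where j: "j < k2" "f a = f (Suc (Suc (2*j)))" by auto
      then have "Suc (Suc (2*j)) < m" by (simp add: k2_def)
      then have "a = Suc (Suc (2*j))" using inj[OF that(1), of "Suc (Suc (2*j))"] j(2) by simp
      then show False using that(2) by simp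
    qed
    have IHo: "s2 (g i) = (\<Sum>j<Suc i. s1 (g j))" if "i < k" for i using IH that unfolding isP_def by blast
    have IHn: "s2 q = s1 q" if "q \<notin> g ` {..<k}" for q using IH that unfolding isP_def by blast
    have A: "s3 (f i) = (\<Sum>k<Suc i. s (f k))" if "i < m" for i
    proof -
      have "i = 0 \<or> (\<exists>j. i = Suc (2*j)) \<or> (\<exists>j. i = Suc (Suc (2*j)))" by presburger
      then consider "i = 0" | j where "i = Suc (2*j)" | j where "i = Suc (Suc (2*j))" by blast
      then show ?thesis
      proof cases
        case 1
        have "s3 (f i) = s2 (f i)" by (rule s3n, rule hq) (use that 1 in auto)
        also have "... = s1 (f i)" by (rule IHn, rule hg) (use that 1 in auto)
        also have "... = s (f i)" by (rule s1n, rule hg) (use that 1 in auto)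
        finally show ?thesis using 1 by simp
      next
        case 2
        have jk: "j < k" using 2 that by (simp add: k_def)
        have "s3 (f i) = s2 (f i)" by (rule s3n, rule hq) (use that 2 in auto)
        also have "... = (\<Sum>i<Suc j. s1 (g i))" using IHo[OF jk] 2 by (simp add: g_def)
        also have "... = (\<Sum>i<2*j+2. s (f i))" by (rule sum_odd[OF jk])
        finally show ?thesis using 2 by simp
      next
        case 3
        have jk: "j < k" "j < k2" using 3 that by (auto simp: k_def k2_def)
        have "s3 (f i) = s2 (f (Suc (Suc (2*j)))) + s2 (f (Suc (2*j)))" using s3e[OF jk(2)] 3 by simp
        also have "s2 (f (Suc (Suc (2*j)))) = s1 (f (Suc (Suc (2*j))))"
          by (rule IHn, rule hg) (use that 3 in auto)
        also have "... = s (f (Suc (Suc (2*j))))"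
          by (rule s1n, rule hg) (use that 3 in auto)
        also have "s2 (f (Suc (2*j))) = (\<Sum>i<Suc j. s1 (g i))" using IHo[OF jk(1)] by (simp add: g_def)
        also have "... = (\<Sum>i<2*j+2. s (f i))" by (rule sum_odd[OF jk(1)])
        finally show ?thesis using 3 by (simp add: add.commute)
      qed
    qed
    have B: "s3 q = s q" if "q \<notin> f ` {..<m}" for q
    proof -
      have "q \<notin> (\<lambda>j. f (Suc (Suc (2*j)))) ` {..<k2}"
      proof
        assume "q \<in> (\<lambda>j. f (Suc (Suc (2*j)))) ` {..<k2}"
        then obtain j where "j < k2" "q = f (Suc (Suc (2*j)))" by auto
        moreover then have "Suc (Suc (2*j)) < m" by (simp add: k2_def)
        ultimately show False using that by auto
      qed
      then have "s3 q = s2 q" by (rule s3n)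
      moreover have q2: "q \<notin> g ` {..<k}"
      proof
        assume "q \<in> g ` {..<k}"
        then obtain j where "j < k" "q = f (Suc (2*j))" by (auto simp: g_def)
        moreover then have "Suc (2*j) < m" by (simp add: k_def)
        ultimately show False using that by auto
      qed
      moreover have "s2 q = s1 q" by (rule IHn[OF q2])
      moreover have "s1 q = s q" by (rule s1n[OF q2])
      ultimately show ?thesis by simp
    qed
    show ?thesis unfolding res isP_def using A B by blast
  qed
qed

fun clog :: "nat \<Rightarrow> nat" where
  "clog m = (if m \<le> 1 then 0 else Suc (clog ((m+1) div 2)))"

declare clog.simps[simp del]

lemma clog_mono: "a \<le> b \<Longrightarrow> clog a \<le> clog b"
proof (induction b arbitrary: a rule: clog.induct)
  case (1 b)
  show ?case
  proof (cases "a \<le> 1")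
    case True then show ?thesis by (simp add: clog.simps)
  next
    case False
    then have "clog ((a+1) div 2) \<le> clog ((b+1) div 2)" using 1 by simp
    then show ?thesis using False 1(2) by (simp add: clog.simps)
  qed
qed

lemma fi_length: "length (fi t f m) \<le> 2 * clog m + 1"
proof (induction t f m rule: fi.induct)
  case (1 t f m)
  show ?case
  proof (cases "m \<le> 1")
    case True then show ?thesis by (subst fi.simps) auto
  next
    case False
    then have "length (fi t (\<lambda>j. f (2*j)) ((m+1) div 2)) \<le> 2 * clog ((m+1) div 2) + 1" using 1 by simp
    then show ?thesis using False by (subst fi.simps) (simp add: clog.simps[of m])
  qed
qed

lemma pc_length: "length (pc f m) \<le> 2 * clog m"
proof (induction f m rule: pc.induct)
  case (1 f m)
  show ?case
  proof (cases "m \<le> 1")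
    case True then show ?thesis by (subst pc.simps) auto
  next
    case False
    then have "length (pc (\<lambda>j. f (Suc (2*j))) (m div 2)) \<le> 2 * clog (m div 2)" using 1 by simp
    moreover have "clog (m div 2) \<le> clog ((m+1) div 2)" by (rule clog_mono) simp
    ultimately show ?thesis using False by (subst pc.simps) (simp add: clog.simps[of m])
  qed
qed

lemma fi_ok: "inj_on f {..<m} \<Longrightarrow> t \<notin> f ` {..<m} \<Longrightarrow>
  (\<forall>l\<in>set (fi t f m). distinct (lq l)) \<and> cq (fi t f m) \<subseteq> insert t (f ` {..<m})"
proof (induction t f m rule: fi.induct)
  case (1 t f m)
  have inj: "\<And>a b. a < m \<Longrightarrow> b < m \<Longrightarrow> f a = f b \<longleftrightarrow> a = b"
    using "1.prems"(1) by (auto simp: inj_on_def)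
  show ?case
  proof (cases "m \<le> 1")
    case True
    then consider "m = 0" | "m = 1" by linarith
    then show ?thesis
    proof cases
      case 1 then show ?thesis by (simp add: fi.simps)
    next
      case 2 then have "t \<noteq> f 0" using "1.prems" by auto
      then show ?thesis using 2 by (simp add: fi.simps)
    qed
  next
    case False
    define Ly where "Ly = map (\<lambda>j. (f (2*j+1), f (2*j))) [0..<m div 2]"
    have fi_eq: "fi t f m = [Ly] @ fi t (\<lambda>j. f (2*j)) ((m+1) div 2) @ [Ly]"
      using False by (subst fi.simps) (simp add: Ly_def)
    have dL: "distinct (lq Ly)" unfolding Ly_def lq_map
      by (rule pairs_distinct) (auto simp: inj_on_def inj, presburger)
    have qL: "qset Ly \<subseteq> f ` {..<m}" by (auto simp: Ly_def qset_map)
    have pi: "inj_on (\<lambda>j. f (2*j)) {..<(m+1) div 2}" by (auto simp: inj_on_def inj)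
    have pt: "t \<notin> (\<lambda>j. f (2*j)) ` {..<(m+1) div 2}" using "1.prems"(2) by auto
    have IH: "(\<forall>l\<in>set (fi t (\<lambda>j. f (2*j)) ((m+1) div 2)). distinct (lq l)) \<and>
       cq (fi t (\<lambda>j. f (2*j)) ((m+1) div 2)) \<subseteq> insert t ((\<lambda>j. f (2*j)) ` {..<(m+1) div 2})"
      using "1.IH" False pi pt by simp
    have "(\<lambda>j. f (2*j)) ` {..<(m+1) div 2} \<subseteq> f ` {..<m}" by auto
    then show ?thesis using IH dL qL unfolding fi_eq by auto
  qed
qed

lemma pc_ok: "inj_on f {..<m} \<Longrightarrow>
  (\<forall>l\<in>set (pc f m). distinct (lq l)) \<and> cq (pc f m) \<subseteq> f ` {..<m}"
proof (induction f m rule: pc.induct)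
  case (1 f m)
  have inj: "\<And>a b. a < m \<Longrightarrow> b < m \<Longrightarrow> f a = f b \<longleftrightarrow> a = b"
    using "1.prems"(1) by (auto simp: inj_on_def)
  show ?case
  proof (cases "m \<le> 1")
    case True then have "pc f m = []" by (simp add: pc.simps)
    then show ?thesis by simp
  next
    case False
    define P where "P = map (\<lambda>j. (f (2*j), f (Suc (2*j)))) [0..<m div 2]"
    define Q where "Q = map (\<lambda>j. (f (Suc (2*j)), f (Suc (Suc (2*j))))) [0..<(m - 1) div 2]"
    have pc_eq: "pc f m = [P] @ pc (\<lambda>j. f (Suc (2*j))) (m div 2) @ [Q]"
      using False by (subst pc.simps) (simp add: P_def Q_def)
    have dP: "distinct (lq P)" unfolding P_def lq_map
      by (rule pairs_distinct) (auto simp: inj_on_def inj, presburger)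
    have dQ: "distinct (lq Q)" unfolding Q_def lq_map
      by (rule pairs_distinct) (auto simp: inj_on_def inj, presburger)
    have qP: "qset P \<subseteq> f ` {..<m}" by (auto simp: P_def qset_map)
    have qQ: "qset Q \<subseteq> f ` {..<m}" by (auto simp: Q_def qset_map)
    have gi: "inj_on (\<lambda>j. f (Suc (2*j))) {..<m div 2}" by (auto simp: inj_on_def inj)
    have IH: "(\<forall>l\<in>set (pc (\<lambda>j. f (Suc (2*j))) (m div 2)). distinct (lq l)) \<and>
       cq (pc (\<lambda>j. f (Suc (2*j))) (m div 2)) \<subseteq> (\<lambda>j. f (Suc (2*j))) ` {..<m div 2}"
      using "1.IH" False gi by simp
    have "(\<lambda>j. f (Suc (2*j))) ` {..<m div 2} \<subseteq> f ` {..<m}" by auto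
    then show ?thesis using IH dP dQ qP qQ unfolding pc_eq by auto
  qed
qed

lemma nth_image_set: "(!) xs ` {..<length xs} = set xs"
  by (auto simp: in_set_conv_nth)

fun chainL :: "nat list \<Rightarrow> (nat \<times> nat) list" where
  "chainL (a # b # r) = (a, b) # chainL (b # r)"
| "chainL _ = []"

lemma chainL_isP: "distinct ls \<Longrightarrow> isP ((!) ls) (length ls) s (gates (chainL ls) (s :: nat \<Rightarrow> 'a::ab_group_add))"
proof (induction ls arbitrary: s rule: chainL.induct)
  case (1 a b r)
  define s' where "s' = s(b := s b + s a)"
  have IH: "isP ((!) (b # r)) (length (b # r)) s' (gates (chainL (b # r)) s')"
    using 1 by simp
  have g: "gates (chainL (a # b # r)) s = gates (chainL (b # r)) s'" by (simp add: s'_def gt_def)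
  have sa: "s' a = s a" "\<And>x. x \<in> set r \<Longrightarrow> s' x = s x" using "1.prems" by (auto simp: s'_def)
  have A: "gates (chainL (b # r)) s' ((a # b # r) ! i) = (\<Sum>k<Suc i. s ((a # b # r) ! k))"
    if "i < length (a # b # r)" for i
  proof (cases i)
    case 0
    have "a \<notin> (!) (b # r) ` {..<length (b # r)}" using "1.prems" by (simp only: nth_image_set) simp
    then show ?thesis using IH 0 sa(1) unfolding isP_def by simp
  next
    case (Suc j)
    have "gates (chainL (b # r)) s' ((b # r) ! j) = (\<Sum>k<Suc j. s' ((b # r) ! k))"
      using IH that Suc unfolding isP_def by simp
    also have "... = s' b + (\<Sum>k<j. s' (r ! k))" by (subst sum.lessThan_Suc_shift) simp
    also have "(\<Sum>k<j. s' (r ! k)) = (\<Sum>k<j. s (r ! k))"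
      by (rule sum.cong[OF refl]) (use that Suc sa(2) in auto)
    also have "s' b = s b + s a" using "1.prems" by (simp add: s'_def)
    finally have e: "gates (chainL (b # r)) s' ((b # r) ! j) = s b + s a + (\<Sum>k<j. s (r ! k))" .
    have "(\<Sum>k<Suc (Suc j). s ((a # b # r) ! k)) = s a + (s b + (\<Sum>k<j. s (r ! k)))"
      by (simp only: sum.lessThan_Suc_shift) simp
    then show ?thesis using e Suc by (simp add: add_ac)
  qed
  have B: "gates (chainL (b # r)) s' q = s q" if "q \<notin> (!) (a # b # r) ` {..<length (a # b # r)}" for q
  proof -
    have "q \<notin> (!) (b # r) ` {..<length (b # r)}" "q \<noteq> b"
      using that by (simp_all only: nth_image_set) simp_all
    then show ?thesis using IH unfolding isP_def s'_def by simp
  qed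
  show ?case unfolding isP_def g using A B by blast
qed (auto simp: isP_def less_Suc_eq)

lemma pc_chain: "distinct ls \<Longrightarrow> gates (concat (pc ((!) ls) (length ls))) s = gates (chainL ls) (s :: nat \<Rightarrow> 'a::ab_group_add)"
  by (rule isP_unique[OF pc_sem chainL_isP]) (auto intro: inj_on_nth)

definition memg :: "nat \<Rightarrow> nat list \<Rightarrow> (nat \<times> nat) list" where
  "memg t M = map (\<lambda>a. (a, t)) M"

lemma memg_sem: "t \<notin> set M \<Longrightarrow> gates (memg t M) s = (s :: nat \<Rightarrow> 'a::ab_group_add)(t := s t + sum_list (map s M))"
proof (induction M arbitrary: s)
  case Nil then show ?case by (simp add: memg_def)
next
  case (Cons a M)
  have "gates (memg t (a # M)) s = gates (memg t M) (s(t := s t + s a))" by (simp add: memg_def gt_def)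
  also have "... = (s(t := s t + s a))(t := (s(t := s t + s a)) t + sum_list (map (s(t := s t + s a)) M))"
    by (rule Cons.IH) (use Cons.prems in simp)
  also have "map (s(t := s t + s a)) M = map s M" using Cons.prems by auto
  finally show ?case by (simp add: add.assoc fun_eq_iff)
qed

lemma fi_memg: assumes "\<forall>x::'a. x + x = 0" "distinct (t # M)"
  shows "gates (concat (fi t ((!) M) (length M))) s = gates (memg t M) (s :: nat \<Rightarrow> 'a::ab_group_add)"
proof -
  have d: "distinct M" "t \<notin> set M" using assms(2) by auto
  have i: "inj_on ((!) M) {..<length M}" "t \<notin> (!) M ` {..<length M}"
    by (rule inj_on_nth[OF d(1)], simp) (simp only: nth_image_set d(2), simp)
  have "(\<Sum>k<length M. s (M ! k)) = sum_list (map s M)"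
    by (simp add: sum_list_sum_nth atLeast0LessThan)
  then show ?thesis using fi_sem[OF assms(1) i] memg_sem[of t M s] assms(2) by simp
qed



definition tsz :: "ctree \<Rightarrow> nat" where "tsz T = length (leaves T)"

definition gat :: "lab \<Rightarrow> ctree \<Rightarrow> ctree \<Rightarrow> nat \<times> nat" where
  "gat d l r = (case d of L \<Rightarrow> (qidx r, qidx l) | R \<Rightarrow> (qidx l, qidx r))"

fun tops :: "ctree \<Rightarrow> (nat \<times> nat) list" where
  "tops (Leaf a) = []"
| "tops (Node d l r) = tops l @ tops r @ [gat d l r]"

lemma node_mats_tops: "node_mats n T = map (\<lambda>(i,j). Rmat n i j) (tops T)"
proof (induction T)
  case (Node d l r) then show ?case by (cases d) (auto simp: gat_def)
qed simp

fun lights :: "ctree \<Rightarrow> ctree list" where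
  "lights (Leaf a) = []"
| "lights (Node d l r) = (if tsz r \<le> tsz l then lights l @ [r] else lights r @ [l])"

fun bot :: "ctree \<Rightarrow> nat" where
  "bot (Leaf a) = a"
| "bot (Node d l r) = (if tsz r \<le> tsz l then bot l else bot r)"

fun catg :: "ctree \<Rightarrow> (nat \<times> nat) list" where
  "catg (Leaf a) = []"
| "catg (Node d l r) = (if tsz r \<le> tsz l then catg l else catg r) @ [gat d l r]"

lemma qidx_in: "qidx T \<in> set (leaves T)"
proof (induction T)
  case (Node d l r) then show ?case by (cases d) auto
qed simp

lemma qidx_gat: "qset [gat d l r] = {qidx l, qidx r}"
  by (cases d) (auto simp: gat_def)

lemma qset_tops: "qset (tops T) \<subseteq> set (leaves T)"
proof (induction T)
  case (Node d l r) then show ?case using qidx_gat[of d l r] qidx_in[of l] qidx_in[of r] by auto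
qed simp

lemma qset_catg: "qset (catg T) \<subseteq> set (leaves T)"
proof (induction T)
  case (Node d l r) then show ?case using qidx_gat[of d l r] qidx_in[of l] qidx_in[of r] by auto
qed simp

lemma mset_leaves: "mset (leaves T) = mset (bot T # concat (map leaves (lights T)))"
proof (induction T)
  case (Node d l r) then show ?case by auto
qed simp

lemma leaves_nonempty: "leaves T \<noteq> []"
  by (induction T) auto

lemma lights_sub: "S \<in> set (lights T) \<Longrightarrow> set (leaves S) \<subseteq> set (leaves T)"
proof -
  assume "S \<in> set (lights T)"
  then have "set (leaves S) \<subseteq> set (bot T # concat (map leaves (lights T)))" by auto
  also have "... = set (leaves T)" using mset_leaves[of T] by (metis mset_eq_setD)
  finally show ?thesis .
qed

lemma lights_half: "S \<in> set (lights T) \<Longrightarrow> 2 * tsz S \<le> tsz T"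
proof (induction T)
  case (Node d l r)
  show ?case
  proof (cases "tsz r \<le> tsz l")
    case True
    then have "S \<in> set (lights l) \<or> S = r" using Node.prems by auto
    then show ?thesis using Node.IH(1) True by (auto simp: tsz_def)
  next
    case False
    then have "S \<in> set (lights r) \<or> S = l" using Node.prems by auto
    then show ?thesis using Node.IH(2) False by (auto simp: tsz_def)
  qed
qed simp

lemma tsz_pos: "tsz T \<ge> 1"
  using leaves_nonempty[of T] by (simp add: tsz_def Suc_le_eq)

lemma distinct_leaves_lights:
  "distinct (leaves T) \<Longrightarrow> distinct (bot T # concat (map leaves (lights T)))"
  using mset_eq_imp_distinct_iff[OF mset_leaves[of T]] by simp

lemma qset_concat_tops: "qset (concat (map tops Ss)) \<subseteq> (\<Union>S\<in>set Ss. set (leaves S))"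
proof (induction Ss)
  case (Cons S Ss) then show ?case using qset_tops[of S] by (auto simp del: qset_concat)
qed simp

lemma distinct_node: "distinct (leaves (Node d l r)) \<Longrightarrow> distinct (leaves l) \<and> distinct (leaves r) \<and> set (leaves l) \<inter> set (leaves r) = {}"
  by simp

lemma lemmaA: "distinct (leaves T) \<Longrightarrow> gates (tops T) s = gates (catg T) (gates (concat (map tops (lights T))) s)"
proof (induction T arbitrary: s)
  case (Leaf a) then show ?case by simp
next
  case (Node d l r)
  have dl: "distinct (leaves l)" and dr: "distinct (leaves r)" and dis: "set (leaves l) \<inter> set (leaves r) = {}"
    using Node.prems by auto
  show ?case
  proof (cases "tsz r \<le> tsz l")
    case True
    have c: "cok (catg l) (tops r)" by (rule cok_disj) (use qset_catg[of l] qset_tops[of r] dis in blast)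
    have "gates (tops (Node d l r)) s = gt (gat d l r) (gates (tops r) (gates (tops l) s))" by simp
    also have "... = gt (gat d l r) (gates (tops r) (gates (catg l) (gates (concat (map tops (lights l))) s)))"
      using Node.IH(1)[OF dl] by simp
    also have "... = gt (gat d l r) (gates (catg l) (gates (tops r) (gates (concat (map tops (lights l))) s)))"
      by (subst gates_comm[OF c]) (rule refl)
    finally show ?thesis using True by simp
  next
    case False
    have sub: "qset (concat (map tops (lights r))) \<subseteq> set (leaves r)"
      using qset_concat_tops[of "lights r"] lights_sub[of _ r] by blast
    have c: "cok (tops l) (concat (map tops (lights r)))"
      by (rule cok_disj) (use qset_tops[of l] sub dis in blast)
    have "gates (tops (Node d l r)) s = gt (gat d l r) (gates (tops r) (gates (tops l) s))" by simp
    also have "... = gt (gat d l r) (gates (catg r) (gates (concat (map tops (lights r))) (gates (tops l) s)))"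
      using Node.IH(2)[OF dr] by simp
    also have "... = gt (gat d l r) (gates (catg r) (gates (tops l) (gates (concat (map tops (lights r))) s)))"
      by (subst gates_comm[OF c]) (rule refl)
    finally show ?thesis using False by simp
  qed
qed

fun cgl :: "(nat \<times> nat list) list \<Rightarrow> (nat \<times> nat) list" where
  "cgl [] = []"
| "cgl ((l, M) # G) = memg l M @ (case G of [] \<Rightarrow> [] | (l', M') # _ \<Rightarrow> (l, l') # cgl G)"

lemma cgl_snoc_lead: "cgl (G @ [(l, M), (x, [])]) = cgl (G @ [(l, M)]) @ [(l, x)]"
proof (induction G)
  case Nil then show ?case by (simp add: memg_def)
next
  case (Cons p G)
  obtain a A where p: "p = (a, A)" by (cases p)
  show ?case
  proof (cases G)
    case Nil then show ?thesis using p by (simp add: memg_def)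
  next
    case (Cons q G') then obtain b B where "q = (b, B)" by (cases q)
    then show ?thesis using Cons.IH p \<open>G = q # G'\<close> by simp
  qed
qed

lemma cgl_snoc_mem: "cgl (G @ [(l, M @ [x])]) = cgl (G @ [(l, M)]) @ [(x, l)]"
proof (induction G)
  case Nil then show ?case by (simp add: memg_def)
next
  case (Cons p G)
  obtain a A where p: "p = (a, A)" by (cases p)
  show ?case
  proof (cases G)
    case Nil then show ?thesis using p by (simp add: memg_def)
  next
    case (Cons q G') then obtain b B where "q = (b, B)" by (cases q)
    then show ?thesis using Cons.IH p \<open>G = q # G'\<close> by simp
  qed
qed

definition gq :: "(nat \<times> nat list) list \<Rightarrow> nat list" where
  "gq G = concat (map (\<lambda>(l, M). l # M) G)"

lemma gq_simps[simp]: "gq [] = []" "gq ((l, M) # G) = l # M @ gq G" "gq (G @ H) = gq G @ gq H"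
  by (auto simp: gq_def)

lemma gq_mem: "(l, M) \<in> set G \<Longrightarrow> l \<in> set (gq G) \<and> set M \<subseteq> set (gq G)"
  by (induction G) auto

lemma gq_fst: "distinct (gq G) \<Longrightarrow> distinct (map fst G)"
proof (induction G)
  case (Cons x G)
  obtain l M where x: "x = (l, M)" by (rule prod.exhaust)
  have "l \<notin> fst ` set G"
  proof
    assume "l \<in> fst ` set G"
    then obtain M' where "(l, M') \<in> set G" by force
    then have "l \<in> set (gq G)" using gq_mem by blast
    then show False using Cons.prems x by simp
  qed
  then show ?case using Cons x by simp
qed simp

definition mgates :: "(nat \<times> nat list) list \<Rightarrow> (nat \<times> nat) list" where
  "mgates G = concat (map (\<lambda>(l, M). memg l M) G)"

lemma mgates_simps[simp]: "mgates [] = []" "mgates ((l, M) # G) = memg l M @ mgates G"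
  by (auto simp: mgates_def)

lemma cgl_sem: "distinct (gq G) \<Longrightarrow> gates (cgl G) s = gates (chainL (map fst G)) (gates (mgates G) s)"
proof (induction G arbitrary: s rule: cgl.induct)
  case 1 then show ?case by simp
next
  case (2 l M G)
  show ?case
  proof (cases G)
    case Nil then show ?thesis by simp
  next
    case (Cons q G') then obtain l' M' where q: "q = (l', M')" by (cases q)
    have d: "distinct (gq G)" using "2.prems" by simp
    have H1: "l \<noteq> e \<and> c \<noteq> l'" if ce: "(c, e) \<in> set (mgates G)" for c e
    proof -
      from ce obtain lb Mb where inG: "(lb, Mb) \<in> set G" "c \<in> set Mb" "e = lb"
        by (auto simp: mgates_def memg_def)
      have "e \<in> set (gq G)" using inG by (force simp: gq_def)
      moreover have "l \<notin> set (gq G)" using "2.prems" by simp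
      ultimately have "l \<noteq> e" by blast
      moreover have "c \<noteq> l'"
      proof
        assume "c = l'"
        have dG: "distinct (l' # M' @ gq G')" using d Cons q by simp
        show False
        proof (cases "(lb, Mb) = (l', M')")
          case True then show False using inG(2) \<open>c = l'\<close> dG by simp
        next
          case False
          then have "(lb, Mb) \<in> set G'" using inG(1) Cons q by auto
          then have "c \<in> set (gq G')" using inG(2) by (force simp: gq_def)
          then show False using \<open>c = l'\<close> dG by simp
        qed
      qed
      ultimately show "l \<noteq> e \<and> c \<noteq> l'" by simp
    qed
    have c: "cok [(l, l')] (mgates G)" using H1 unfolding cok_def by auto
    have "gates (cgl ((l, M) # G)) s = gates (cgl G) (gt (l, l') (gates (memg l M) s))"
      using Cons q by simp
    also have "... = gates (chainL (map fst G)) (gates (mgates G) (gt (l, l') (gates (memg l M) s)))"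
      by (rule "2.IH"[OF Cons q[symmetric] d])
    also have "gates (mgates G) (gt (l, l') (gates (memg l M) s)) = gt (l, l') (gates (mgates G) (gates (memg l M) s))"
      using gates_comm[OF c, of "gates (memg l M) s"] by simp
    finally show ?thesis using Cons q by simp
  qed
qed

fun groups :: "ctree \<Rightarrow> (nat \<times> nat list) list" where
  "groups (Leaf a) = [(a, [])]"
| "groups (Node d l r) = (if tsz r \<le> tsz l then
     (if d = L then butlast (groups l) @ [(fst (last (groups l)), snd (last (groups l)) @ [qidx r])]
      else groups l @ [(qidx r, [])])
   else
     (if d = R then butlast (groups r) @ [(fst (last (groups r)), snd (last (groups r)) @ [qidx l])]
      else groups r @ [(qidx l, [])]))"

lemma groups_ne: "groups T \<noteq> []"
  by (induction T) auto

lemma groups_last: "fst (last (groups T)) = qidx T"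
proof (induction T)
  case (Node d l r) then show ?case by (cases d) auto
qed simp

lemma groups_split: "\<exists>B X. groups T = B @ [(qidx T, X)]"
proof -
  have "groups T = butlast (groups T) @ [last (groups T)]" using groups_ne[of T] by simp
  then show ?thesis using groups_last[of T] by (metis prod.collapse)
qed

lemma catg_cgl: "catg T = cgl (groups T)"
proof (induction T)
  case (Leaf a) then show ?case by (simp add: memg_def)
next
  case (Node d l r)
  show ?case
  proof (cases "tsz r \<le> tsz l")
    case True
    obtain B X where G: "groups l = B @ [(qidx l, X)]" using groups_split by blast
    show ?thesis
    proof (cases d)
      case L
      have "cgl (B @ [(qidx l, X @ [qidx r])]) = cgl (groups l) @ [(qidx r, qidx l)]"
        using cgl_snoc_mem[of B "qidx l" X "qidx r"] G by simp
      then show ?thesis using True L Node.IH(1) G by (simp add: gat_def)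
    next
      case R
      have "cgl (B @ [(qidx l, X), (qidx r, [])]) = cgl (groups l) @ [(qidx l, qidx r)]"
        using cgl_snoc_lead[of B "qidx l" X "qidx r"] G by simp
      then show ?thesis using True R Node.IH(1) G by (simp add: gat_def)
    qed
  next
    case False
    obtain B X where G: "groups r = B @ [(qidx r, X)]" using groups_split by blast
    show ?thesis
    proof (cases d)
      case R
      have "cgl (B @ [(qidx r, X @ [qidx l])]) = cgl (groups r) @ [(qidx l, qidx r)]"
        using cgl_snoc_mem[of B "qidx r" X "qidx l"] G by simp
      then show ?thesis using False R Node.IH(2) G by (simp add: gat_def)
    next
      case L
      have "cgl (B @ [(qidx r, X), (qidx l, [])]) = cgl (groups r) @ [(qidx r, qidx l)]"
        using cgl_snoc_lead[of B "qidx r" X "qidx l"] G by simp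
      then show ?thesis using False L Node.IH(2) G by (simp add: gat_def)
    qed
  qed
qed

lemma mset_gq: "mset (gq (groups T)) = mset (bot T # map qidx (lights T))"
proof (induction T)
  case (Leaf a) then show ?case by simp
next
  case (Node d l r)
  obtain B X where Gl: "groups l = B @ [(qidx l, X)]" using groups_split by blast
  obtain B' X' where Gr: "groups r = B' @ [(qidx r, X')]" using groups_split by blast
  show ?case using Node Gl Gr by (cases d) auto
qed

definition catcircG :: "(nat \<times> nat list) list \<Rightarrow> (nat \<times> nat) list list" where
  "catcircG G = parl (map (\<lambda>(l, M). fi l ((!) M) (length M)) G) @ pc ((!) (map fst G)) (length G)"

lemma pdisj_mono: "(\<forall>x\<in>set xs. F x \<subseteq> Q x) \<Longrightarrow> pdisj (map Q xs) \<Longrightarrow> pdisj (map F xs)"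
proof (induction xs)
  case (Cons x xs)
  have "F x \<inter> \<Union>(set (map F xs)) \<subseteq> Q x \<inter> \<Union>(set (map Q xs))" using Cons.prems(1) by auto
  then have "F x \<inter> \<Union>(set (map F xs)) = {}" using Cons.prems(2) by auto
  then show ?case using Cons by simp
qed simp

lemma pdisj_distinct: "distinct (concat (map f xs)) \<Longrightarrow> pdisj (map (\<lambda>x. set (f x)) xs)"
  by (induction xs) auto

lemma fi_group_ok: "distinct (l # M) \<Longrightarrow>
  (\<forall>x\<in>set (fi l ((!) M) (length M)). distinct (lq x)) \<and> cq (fi l ((!) M) (length M)) \<subseteq> set (l # M)"
proof -
  assume a: "distinct (l # M)"
  have d: "distinct M" "l \<notin> set M" using a by auto
  have i: "inj_on ((!) M) {..<length M}" "l \<notin> (!) M ` {..<length M}"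
    by (rule inj_on_nth[OF d(1)], simp) (simp only: nth_image_set d(2), simp)
  show ?thesis using fi_ok[OF i] by (simp add: nth_image_set)
qed

lemma pd_groups: assumes "distinct (gq G)"
  shows "pdisj (map cq (map (\<lambda>(l, M). fi l ((!) M) (length M)) G))"
proof -
  have "pdisj (map (\<lambda>x. set ((\<lambda>(l, M). l # M) x)) G)"
    by (rule pdisj_distinct) (use assms in \<open>simp add: gq_def\<close>)
  moreover have "\<forall>x\<in>set G. (cq \<circ> (\<lambda>(l, M). fi l ((!) M) (length M))) x \<subseteq> (\<lambda>x. set ((\<lambda>(l, M). l # M) x)) x"
  proof
    fix x assume "x \<in> set G"
    obtain l M where x1: "x = (l, M)" by (rule prod.exhaust)
    with \<open>x \<in> set G\<close> have x: "x = (l, M)" "(l, M) \<in> set G" by simp_all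
    have "distinct (l # M)" using assms x(2)
      by (induction G) (auto simp: gq_def)
    then show "(cq \<circ> (\<lambda>(l, M). fi l ((!) M) (length M))) x \<subseteq> (\<lambda>x. set ((\<lambda>(l, M). l # M) x)) x"
      using fi_group_ok x by auto
  qed
  ultimately have "pdisj (map (cq \<circ> (\<lambda>(l, M). fi l ((!) M) (length M))) G)" by (rule pdisj_mono[rotated])
  then show ?thesis by (simp add: comp_def)
qed

lemma catcircG_sem: assumes "\<forall>x::'a. x + x = 0" "distinct (gq G)"
  shows "gates (concat (catcircG G)) s = gates (cgl G) (s :: nat \<Rightarrow> 'a::ab_group_add)"
proof -
  let ?Cs = "map (\<lambda>(l, M). fi l ((!) M) (length M)) G"
  have pd: "pdisj (map cq ?Cs)" by (rule pd_groups[OF assms(2)])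
  have A: "gates (concat (concat ?Cs)) u = gates (mgates G) u" if "distinct (gq G)" for u :: "nat \<Rightarrow> 'a"
    using that
  proof (induction G arbitrary: u)
    case (Cons x G)
    obtain l M where x: "x = (l, M)" by (cases x)
    have d: "distinct (l # M)" "distinct (gq G)" using Cons.prems x by auto
    show ?case using Cons.IH[OF d(2)] fi_memg[OF assms(1) d(1)] x by simp
  qed simp
  have dm: "distinct (map fst G)" using gq_fst[OF assms(2)] .
  have "gates (concat (catcircG G)) s = gates (concat (pc ((!) (map fst G)) (length G))) (gates (concat (parl ?Cs)) s)"
    by (simp add: catcircG_def)
  also have "... = gates (chainL (map fst G)) (gates (concat (parl ?Cs)) s)"
    using pc_chain[OF dm, of "gates (concat (parl ?Cs)) s"] by simp
  also have "... = gates (chainL (map fst G)) (gates (mgates G) s)"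
    using parl_sem[OF pd, of s] A[OF assms(2), of s] by simp
  also have "... = gates (cgl G) s" by (rule cgl_sem[OF assms(2), symmetric])
  finally show ?thesis .
qed

lemma catcircG_ok: assumes "distinct (gq G)" "set (gq G) \<subseteq> {..<n}"
  shows "(\<forall>x\<in>set (catcircG G). lay_ok n x) \<and> cq (catcircG G) \<subseteq> set (gq G)"
proof -
  let ?Cs = "map (\<lambda>(l, M). fi l ((!) M) (length M)) G"
  have g: "(\<forall>x\<in>set (fi l ((!) M) (length M)). distinct (lq x)) \<and> cq (fi l ((!) M) (length M)) \<subseteq> set (gq G)"
    if "(l, M) \<in> set G" for l M
  proof -
    have "distinct (l # M)" using assms(1) that by (induction G) (auto simp: gq_def)
    moreover have "set (l # M) \<subseteq> set (gq G)" using that by (force simp: gq_def)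
    ultimately show ?thesis using fi_group_ok by blast
  qed
  have g2: "\<forall>C\<in>set ?Cs. \<forall>x\<in>set C. lay_ok n x"
  proof (intro ballI)
    fix C x assume C: "C \<in> set ?Cs" and x: "x \<in> set C"
    then obtain l M where lM: "(l, M) \<in> set G" "C = fi l ((!) M) (length M)" by auto
    have "qset x \<subseteq> cq C" using x by (auto simp: cq_def)
    then show "lay_ok n x" using g[OF lM(1)] lM(2) x assms(2) unfolding lay_ok_def by blast
  qed
  have p1: "\<forall>x\<in>set (parl ?Cs). lay_ok n x" by (rule parl_ok[OF pd_groups[OF assms(1)] g2])
  have p1c: "cq (parl ?Cs) \<subseteq> set (gq G)" using g by auto
  have dm: "distinct (map fst G)" using gq_fst[OF assms(1)] .
  have inj: "inj_on ((!) (map fst G)) {..<length (map fst G)}" by (rule inj_on_nth[OF dm]) simp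
  have pco: "(\<forall>l\<in>set (pc ((!) (map fst G)) (length G)). distinct (lq l)) \<and>
      cq (pc ((!) (map fst G)) (length G)) \<subseteq> set (map fst G)"
  proof -
    have e: "(!) (map fst G) ` {..<length G} = set (map fst G)" using nth_image_set[of "map fst G"] by simp
    show ?thesis using pc_ok[OF inj, unfolded length_map e] .
  qed
  have sf: "set (map fst G) \<subseteq> set (gq G)" by (force simp: gq_def)
  have p2: "\<forall>x\<in>set (pc ((!) (map fst G)) (length G)). lay_ok n x"
  proof
    fix x assume x: "x \<in> set (pc ((!) (map fst G)) (length G))"
    have "qset x \<subseteq> cq (pc ((!) (map fst G)) (length G))" using x by (auto simp: cq_def)
    then show "lay_ok n x" using pco x sf assms(2) unfolding lay_ok_def by blast
  qed
  show ?thesis using p1 p1c p2 pco sf unfolding catcircG_def by auto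
qed

lemma catcircG_length: assumes "\<forall>(l, M)\<in>set G. length M \<le> N" "length G \<le> N"
  shows "length (catcircG G) \<le> 4 * clog N + 1"
proof -
  have "length (parl (map (\<lambda>(l, M). fi l ((!) M) (length M)) G)) \<le> 2 * clog N + 1"
  proof (rule parl_length, intro ballI)
    fix C assume "C \<in> set (map (\<lambda>(l, M). fi l ((!) M) (length M)) G)"
    then obtain l M where "(l, M) \<in> set G" "C = fi l ((!) M) (length M)" by auto
    then have "length C \<le> 2 * clog (length M) + 1" "length M \<le> N" using fi_length assms(1) by auto
    moreover have "clog (length M) \<le> clog N" using calculation(2) by (rule clog_mono)
    ultimately show "length C \<le> 2 * clog N + 1" by linarith
  qed
  moreover have "length (pc ((!) (map fst G)) (length G)) \<le> 2 * clog N"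
    using pc_length[of "(!) (map fst G)" "length G"] clog_mono[OF assms(2)] by linarith
  ultimately show ?thesis by (simp add: catcircG_def)
qed

lemma gq_len: "length G \<le> length (gq G)"
  by (induction G) auto

lemma gq_len_M: "(l, M) \<in> set G \<Longrightarrow> length M \<le> length (gq G)"
  by (induction G) auto

lemma len_concat_leaves: "length Ss \<le> length (concat (map leaves Ss))"
proof (induction Ss)
  case (Cons S Ss) then show ?case using leaves_nonempty[of S] by (cases "leaves S") auto
qed simp

lemma distinct_qidx: "distinct (concat (map leaves Ss)) \<Longrightarrow>
   distinct (map qidx Ss) \<and> set (map qidx Ss) \<subseteq> set (concat (map leaves Ss))"
proof (induction Ss)
  case (Cons S Ss)
  have "qidx S \<in> set (leaves S)" by (rule qidx_in)
  then show ?case using Cons by auto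
qed simp

lemma groups_props: assumes "distinct (leaves T)"
  shows "distinct (gq (groups T)) \<and> set (gq (groups T)) \<subseteq> set (leaves T) \<and> length (gq (groups T)) \<le> tsz T"
proof -
  have d: "distinct (bot T # concat (map leaves (lights T)))" by (rule distinct_leaves_lights[OF assms])
  have dq: "distinct (map qidx (lights T))" "set (map qidx (lights T)) \<subseteq> set (concat (map leaves (lights T)))"
    using distinct_qidx[of "lights T"] d by auto
  have d2: "distinct (bot T # map qidx (lights T))" using d dq by auto
  have m: "mset (gq (groups T)) = mset (bot T # map qidx (lights T))" by (rule mset_gq)
  have "set (gq (groups T)) = set (bot T # map qidx (lights T))" using m by (metis mset_eq_setD)
  also have "... \<subseteq> set (bot T # concat (map leaves (lights T)))" using dq by auto
  also have "... = set (leaves T)" using mset_leaves[of T] by (metis mset_eq_setD)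
  finally have s: "set (gq (groups T)) \<subseteq> set (leaves T)" .
  have "length (gq (groups T)) = Suc (length (lights T))" using arg_cong[OF m, of size] by simp
  also have "... \<le> Suc (length (concat (map leaves (lights T))))" using len_concat_leaves by simp
  also have "... = tsz T" using arg_cong[OF mset_leaves[of T], of size] by (simp add: tsz_def)
  finally show ?thesis using mset_eq_imp_distinct_iff[OF m] d2 s by simp
qed

lemma lights_lt: "S \<in> set (lights T) \<Longrightarrow> tsz S < tsz T"
  using lights_half[of S T] tsz_pos[of S] by linarith

function Circ :: "ctree \<Rightarrow> (nat \<times> nat) list list" where
  "Circ T = parl (map Circ (lights T)) @ catcircG (groups T)"
  by pat_completeness auto
termination by (relation "measure tsz") (auto simp: lights_lt)

declare Circ.simps[simp del]

lemma lights_distinct: "distinct (leaves T) \<Longrightarrow> S \<in> set (lights T) \<Longrightarrow> distinct (leaves S)"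
  using distinct_leaves_lights[of T] by (auto simp: distinct_conv_nth[symmetric] dest: distinct_concat_iff[THEN iffD1])

lemma pd_lights: assumes "distinct (leaves T)" "\<forall>S\<in>set (lights T). cq (F S) \<subseteq> set (leaves S)"
  shows "pdisj (map cq (map F (lights T)))"
proof -
  have "pdisj (map (\<lambda>S. set (leaves S)) (lights T))"
    by (rule pdisj_distinct) (use distinct_leaves_lights[OF assms(1)] in simp)
  then have "pdisj (map (cq \<circ> F) (lights T))" by (rule pdisj_mono[rotated]) (use assms(2) in simp)
  then show ?thesis by (simp add: comp_def)
qed

lemma Circ_ok: "distinct (leaves T) \<Longrightarrow> set (leaves T) \<subseteq> {..<n} \<Longrightarrow>
  (\<forall>l\<in>set (Circ T). lay_ok n l) \<and> cq (Circ T) \<subseteq> set (leaves T)"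
proof (induction T rule: Circ.induct)
  case (1 T)
  have IH: "(\<forall>l\<in>set (Circ S). lay_ok n l) \<and> cq (Circ S) \<subseteq> set (leaves S)" if "S \<in> set (lights T)" for S
  proof -
    have "distinct (leaves S)" by (rule lights_distinct[OF "1.prems"(1) that])
    moreover have "set (leaves S) \<subseteq> {..<n}" using lights_sub[OF that] "1.prems"(2) by blast
    ultimately show ?thesis using "1.IH"[OF that] by blast
  qed
  have pd: "pdisj (map cq (map Circ (lights T)))" by (rule pd_lights[OF "1.prems"(1)]) (use IH in blast)
  have p1: "\<forall>l\<in>set (parl (map Circ (lights T))). lay_ok n l" by (rule parl_ok[OF pd]) (use IH in auto)
  have p1c: "cq (parl (map Circ (lights T))) \<subseteq> set (leaves T)" using IH lights_sub by fastforce
  have gp: "distinct (gq (groups T)) \<and> set (gq (groups T)) \<subseteq> set (leaves T)" using groups_props[OF "1.prems"(1)] by blast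
  have c2: "(\<forall>x\<in>set (catcircG (groups T)). lay_ok n x) \<and> cq (catcircG (groups T)) \<subseteq> set (gq (groups T))"
    by (rule catcircG_ok) (use gp "1.prems"(2) in auto)
  have ce: "Circ T = parl (map Circ (lights T)) @ catcircG (groups T)" by (rule Circ.simps)
  show ?case using p1 p1c c2 gp unfolding ce by auto
qed

lemma Circ_cq: assumes "distinct (leaves T)" shows "cq (Circ T) \<subseteq> set (leaves T)"
proof -
  have "set (leaves T) \<subseteq> {..<Suc (Max (set (leaves T)))}"
    by (auto simp: less_Suc_eq_le)
  then show ?thesis using Circ_ok[OF assms] by blast
qed

lemma concat_map_sem: fixes s :: "nat \<Rightarrow> 'a::ab_group_add"
  shows "(\<And>S (u :: nat \<Rightarrow> 'a). S \<in> set Ss \<Longrightarrow> gates (concat (F S)) u = gates (H S) u) \<Longrightarrow>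
   gates (concat (concat (map F Ss))) s = gates (concat (map H Ss)) s"
proof (induction Ss arbitrary: s)
  case (Cons a Ss)
  have "gates (concat (F a)) s = gates (H a) s" using Cons.prems by simp
  then show ?case using Cons by simp
qed simp

lemma Circ_sem: assumes "\<forall>x::'a. x + x = 0"
  shows "distinct (leaves T) \<Longrightarrow> gates (concat (Circ T)) s = gates (tops T) (s :: nat \<Rightarrow> 'a::ab_group_add)"
proof (induction T arbitrary: s rule: Circ.induct)
  case (1 T)
  have dS: "distinct (leaves S)" if "S \<in> set (lights T)" for S by (rule lights_distinct[OF "1.prems" that])
  have pd: "pdisj (map cq (map Circ (lights T)))"
    by (rule pd_lights[OF "1.prems"]) (use Circ_cq[OF dS] in blast)
  have dg: "distinct (gq (groups T))" using groups_props[OF "1.prems"] by blast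
  have "gates (concat (Circ T)) s = gates (concat (catcircG (groups T))) (gates (concat (parl (map Circ (lights T)))) s)"
    by (subst Circ.simps) simp
  also have "... = gates (cgl (groups T)) (gates (concat (concat (map Circ (lights T)))) s)"
    using catcircG_sem[OF assms dg, of "gates (concat (parl (map Circ (lights T)))) s"] parl_sem[OF pd, of s] by simp
  also have "gates (concat (concat (map Circ (lights T)))) s = gates (concat (map tops (lights T))) s"
    by (rule concat_map_sem) (use "1.IH" dS in blast)
  also have "gates (cgl (groups T)) (gates (concat (map tops (lights T))) s) = gates (tops T) s"
    using lemmaA[OF "1.prems", of s] catg_cgl[of T] by simp
  finally show ?case .
qed

lemma bound_step: "c \<ge> 1 \<Longrightarrow> (c - 1) * (4 * (c - 1) + 1) + (4 * c + 1) \<le> c * (4 * c + 1::nat)"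
proof -
  assume "c \<ge> 1" then obtain d where c: "c = Suc d" by (cases c) auto
  show ?thesis unfolding c by (simp add: algebra_simps)
qed

lemma Circ_len: "length (Circ T) \<le> clog (tsz T) * (4 * clog (tsz T) + 1)"
proof (induction T rule: Circ.induct)
  case (1 T)
  define c where "c = clog (tsz T)"
  have cl: "length (catcircG (groups T)) \<le> 4 * c + 1"
  proof (rule catcircG_length[of "groups T" "tsz T", folded c_def])
    have "length (gq (groups T)) \<le> tsz T"
    proof -
      have m: "mset (gq (groups T)) = mset (bot T # map qidx (lights T))" by (rule mset_gq)
      have "length (gq (groups T)) = Suc (length (lights T))" using arg_cong[OF m, of size] by simp
      also have "... \<le> Suc (length (concat (map leaves (lights T))))" using len_concat_leaves by simp
      also have "... = tsz T" using arg_cong[OF mset_leaves[of T], of size] by (simp add: tsz_def)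
      finally show ?thesis .
    qed
    then show "\<forall>(l, M)\<in>set (groups T). length M \<le> tsz T" "length (groups T) \<le> tsz T"
      using gq_len_M[of _ _ "groups T"] gq_len[of "groups T"] by fastforce+
  qed
  show ?case
  proof (cases T)
    case (Leaf a)
    have "Circ T = catcircG [(a, [])]" using Leaf by (subst Circ.simps) simp
    moreover have "catcircG [(a, [])] = []"
      by (simp add: catcircG_def fi.simps pc.simps)
    ultimately show ?thesis by simp
  next
    case (Node d l r)
    have t2: "tsz T \<ge> 2" using Node tsz_pos[of l] tsz_pos[of r] by (simp add: tsz_def)
    then have c: "c = Suc (clog ((tsz T + 1) div 2))" unfolding c_def by (subst clog.simps) simp
    have cS: "clog (tsz S) \<le> c - 1" if "S \<in> set (lights T)" for S
    proof -
      have "tsz S \<le> (tsz T + 1) div 2" using lights_half[OF that] by linarith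
      then show ?thesis using clog_mono c by simp
    qed
    have "length (parl (map Circ (lights T))) \<le> (c - 1) * (4 * (c - 1) + 1)"
    proof (rule parl_length, intro ballI)
      fix C assume "C \<in> set (map Circ (lights T))"
      then obtain S where S: "S \<in> set (lights T)" "C = Circ S" by auto
      have "length C \<le> clog (tsz S) * (4 * clog (tsz S) + 1)" using "1.IH"[OF S(1)] S(2) by simp
      also have "... \<le> (c - 1) * (4 * (c - 1) + 1)"
        using cS[OF S(1)] by (intro mult_le_mono) auto
      finally show "length C \<le> (c - 1) * (4 * (c - 1) + 1)" .
    qed
    then have "length (Circ T) \<le> (c - 1) * (4 * (c - 1) + 1) + (4 * c + 1)"
      using cl by (subst Circ.simps) simp
    also have "... \<le> c * (4 * c + 1)" by (rule bound_step) (simp add: c)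
    finally show ?thesis unfolding c_def .
  qed
qed



definition mat_of :: "nat \<Rightarrow> (nat \<Rightarrow> nat \<Rightarrow> bit) \<Rightarrow> bit mat" where
  "mat_of n s = mat n n (\<lambda>(r, c). s r c)"

definition appG :: "(nat \<times> nat) list \<Rightarrow> (nat \<Rightarrow> nat \<Rightarrow> bit) \<Rightarrow> nat \<Rightarrow> nat \<Rightarrow> bit" where
  "appG g s = (\<lambda>r c. gates g (\<lambda>r'. s r' c) r)"

lemma appG_append: "appG (g @ h) s = appG h (appG g s)"
  by (simp add: appG_def)

lemma appG_Nil: "appG [] s = s" by (simp add: appG_def)

definition sem_mat :: "nat \<Rightarrow> bit mat \<Rightarrow> ((nat \<Rightarrow> nat \<Rightarrow> bit) \<Rightarrow> (nat \<Rightarrow> nat \<Rightarrow> bit)) \<Rightarrow> bool" where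
  "sem_mat n A F \<longleftrightarrow> A \<in> carrier_mat n n \<and> (\<forall>s. A * mat_of n s = mat_of n (F s))"

definition Pm :: "nat \<Rightarrow> (nat \<times> nat) list \<Rightarrow> bit mat" where
  "Pm n l = foldr (\<lambda>(i,j) A. A + E1 n j i) l (1\<^sub>m n)"

lemma E1_carrier[simp]: "E1 n j i \<in> carrier_mat n n" by (simp add: E1_def)

lemma Pm_carrier: "Pm n l \<in> carrier_mat n n"
proof (induction l)
  case Nil then show ?case by (simp add: Pm_def)
next
  case (Cons p l) then show ?case by (cases p) (simp add: Pm_def)
qed

lemma Pm_index: "r < n \<Longrightarrow> k < n \<Longrightarrow>
  Pm n l $$ (r, k) = (if r = k then 1 else 0) + sum_list (map (\<lambda>(i,j). if r = j \<and> k = i then 1 else 0) l)"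
proof (induction l)
  case Nil then show ?case by (simp add: Pm_def)
next
  case (Cons p l)
  obtain i j where p: "p = (i, j)" by (rule prod.exhaust)
  have "Pm n (p # l) = Pm n l + E1 n j i" by (simp add: Pm_def p)
  moreover have "(Pm n l + E1 n j i) $$ (r, k) = Pm n l $$ (r, k) + E1 n j i $$ (r, k)"
    by (rule index_add_mat(1)) (use Cons.prems in \<open>simp_all add: E1_def\<close>)
  moreover have "E1 n j i $$ (r, k) = (if r = j \<and> k = i then 1 else 0)" using Cons.prems by (simp add: E1_def)
  ultimately show ?case using Cons p by (simp add: add_ac)
qed

lemma sum_swap_list: "(\<Sum>k\<in>A. sum_list (map (f k) l)) = sum_list (map (\<lambda>p. \<Sum>k\<in>A. f k p) l)"
  by (induction l) (auto simp: sum.distrib)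

lemma sum_list_mult_right: "sum_list (map f l) * (x :: 'a :: semiring_0) = sum_list (map (\<lambda>p. f p * x) l)"
  by (induction l) (auto simp: distrib_right)

lemma gen_sum: fixes x :: "nat \<Rightarrow> 'a::comm_semiring_1"
  assumes rn: "r < n" and il: "\<forall>(i,j)\<in>set l. i < n"
  shows "(\<Sum>k\<in>{0..<n}. ((if r = k then 1 else 0) + sum_list (map (\<lambda>(i,j). if r = j \<and> k = i then 1 else 0) l)) * x k)
     = x r + sum_list (map (\<lambda>(i,j). if j = r then x i else 0) l)"
proof -
  have "(\<Sum>k\<in>{0..<n}. ((if r = k then 1 else 0) + sum_list (map (\<lambda>(i,j). if r = j \<and> k = i then 1 else 0) l)) * x k)
     = (\<Sum>k\<in>{0..<n}. (if r = k then 1 else 0) * x k) + (\<Sum>k\<in>{0..<n}. sum_list (map (\<lambda>p. (case p of (i,j) \<Rightarrow> if r = j \<and> k = i then 1 else 0) * x k) l))"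
    by (simp add: distrib_right sum.distrib sum_list_mult_right)
  also have "(\<Sum>k\<in>{0..<n}. (if r = k then 1 else 0) * x k) = x r"
  proof -
    have "(\<Sum>k\<in>{0..<n}. (if r = k then 1 else 0) * x k) = (\<Sum>k\<in>{0..<n}. if r = k then x k else 0)"
      by (rule sum.cong) auto
    then show ?thesis using rn by simp
  qed
  also have "(\<Sum>k\<in>{0..<n}. sum_list (map (\<lambda>p. (case p of (i,j) \<Rightarrow> if r = j \<and> k = i then 1 else 0) * x k) l))
      = sum_list (map (\<lambda>p. \<Sum>k\<in>{0..<n}. (case p of (i,j) \<Rightarrow> if r = j \<and> k = i then 1 else 0) * x k) l)"
    by (rule sum_swap_list)
  also have "... = sum_list (map (\<lambda>(i,j). if j = r then x i else 0) l)"
  proof (rule arg_cong[where f=sum_list], rule map_cong[OF refl])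
    fix p assume pl: "p \<in> set l"
    obtain i j where p: "p = (i, j)" by (rule prod.exhaust)
    have "i < n" using pl p il by auto
    then show "(\<Sum>k\<in>{0..<n}. (case p of (i,j) \<Rightarrow> if r = j \<and> k = i then 1 else 0) * x k) =
        (case p of (i,j) \<Rightarrow> if j = r then x i else 0)"
    proof -
      have "(\<Sum>k\<in>{0..<n}. (if r = j \<and> k = i then 1 else 0) * x k) = (\<Sum>k\<in>{0..<n}. if k = i then (if j = r then x k else 0) else 0)"
        by (rule sum.cong) auto
      also have "... = (if j = r then x i else 0)" using \<open>i < n\<close> by simp
      finally show ?thesis using p by simp
    qed
  qed
  finally show ?thesis .
qed

lemma Pm_sem: assumes "lay_ok n l" shows "sem_mat n (Pm n l) (appG l)"
  unfolding sem_mat_def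
proof (intro conjI allI)
  show "Pm n l \<in> carrier_mat n n" by (rule Pm_carrier)
  fix s
  show "Pm n l * mat_of n s = mat_of n (appG l s)"
  proof (rule eq_matI)
    show "dim_row (Pm n l * mat_of n s) = dim_row (mat_of n (appG l s))"
      using Pm_carrier[of n l] by (simp add: mat_of_def)
    show "dim_col (Pm n l * mat_of n s) = dim_col (mat_of n (appG l s))"
      using Pm_carrier[of n l] by (simp add: mat_of_def)
    fix r c assume r: "r < dim_row (mat_of n (appG l s))" and c: "c < dim_col (mat_of n (appG l s))"
    then have rn: "r < n" and cn: "c < n" by (auto simp: mat_of_def)
    have dl: "distinct (lq l)" and ql: "qset l \<subseteq> {..<n}" using assms by (auto simp: lay_ok_def)
    have il: "\<forall>(i,j)\<in>set l. i < n" using ql by (auto simp: qset_def)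
    have "(Pm n l * mat_of n s) $$ (r, c) = (\<Sum>k\<in>{0..<n}. Pm n l $$ (r, k) * s k c)"
      using rn cn Pm_carrier[of n l] by (simp add: mat_of_def scalar_prod_def)
    also have "... = (\<Sum>k\<in>{0..<n}. ((if r = k then 1 else 0) + sum_list (map (\<lambda>(i,j). if r = j \<and> k = i then 1 else 0) l)) * s k c)"
      by (rule sum.cong[OF refl]) (simp only: Pm_index rn atLeastLessThan_iff)
    also have "... = s r c + sum_list (map (\<lambda>(i,j). if j = r then s i c else 0) l)"
      by (rule gen_sum[OF rn il])
    also have "... = gates l (\<lambda>r'. s r' c) r"
      using layer_formula[OF dl, of "\<lambda>r'. s r' c" r] by simp
    finally show "(Pm n l * mat_of n s) $$ (r, c) = mat_of n (appG l s) $$ (r, c)"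
      using rn cn by (simp add: mat_of_def appG_def)
  qed
qed

lemma mat_of_carrier[simp]: "mat_of n s \<in> carrier_mat n n" by (simp add: mat_of_def)

lemma sem_mat_mult: assumes "sem_mat n A F" "sem_mat n B G" shows "sem_mat n (A * B) (F \<circ> G)"
  unfolding sem_mat_def
proof (intro conjI allI)
  have A: "A \<in> carrier_mat n n" and B: "B \<in> carrier_mat n n" using assms by (auto simp: sem_mat_def)
  show "A * B \<in> carrier_mat n n" using A B by simp
  fix s
  have "A * B * mat_of n s = A * (B * mat_of n s)" using A B by (simp add: assoc_mult_mat[of A n n B n "mat_of n s" n])
  also have "B * mat_of n s = mat_of n (G s)" using assms(2) by (simp add: sem_mat_def)
  also have "A * mat_of n (G s) = mat_of n (F (G s))" using assms(1) by (simp add: sem_mat_def)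
  finally show "A * B * mat_of n s = mat_of n ((F \<circ> G) s)" by simp
qed

lemma sem_mat_one: "sem_mat n (1\<^sub>m n) (\<lambda>s. s)"
  unfolding sem_mat_def using left_mult_one_mat[OF mat_of_carrier] by auto

lemma mat_prod_Cons: "mat_prod n (A # As) = A * mat_prod n As" by (simp add: mat_prod_def)

lemma sem_mat_prod: "(\<forall>x\<in>set xs. sem_mat n (M x) (appG (g x))) \<Longrightarrow>
   sem_mat n (mat_prod n (rev (map M xs))) (appG (concat (map g xs)))"
proof (induction xs rule: rev_induct)
  case Nil then show ?case using sem_mat_one[of n] by (simp add: mat_prod_def appG_Nil)
next
  case (snoc x xs)
  have "sem_mat n (M x * mat_prod n (rev (map M xs))) (appG (g x) \<circ> appG (concat (map g xs)))"
    by (rule sem_mat_mult) (use snoc in auto)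
  moreover have "appG (g x) \<circ> appG (concat (map g xs)) = appG (concat (map g (xs @ [x])))"
    by (auto simp: appG_append fun_eq_iff)
  ultimately show ?case by (simp add: mat_prod_Cons)
qed

lemma Rm_sem: "i < n \<Longrightarrow> j < n \<Longrightarrow> i \<noteq> j \<Longrightarrow> sem_mat n (Rmat n i j) (appG [(i, j)])"
proof -
  assume a: "i < n" "j < n" "i \<noteq> j"
  have "Rmat n i j = Pm n [(i, j)]" by (simp add: Rmat_def Pm_def)
  moreover have "lay_ok n [(i, j)]" using a by (simp add: lay_ok_def)
  ultimately show ?thesis using Pm_sem by simp
qed

lemma tops_ok: "distinct (leaves T) \<Longrightarrow> set (leaves T) \<subseteq> {..<n} \<Longrightarrow>
   \<forall>(i,j)\<in>set (tops T). i < n \<and> j < n \<and> i \<noteq> j"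
proof (induction T)
  case (Node d l r)
  have "qidx l \<in> set (leaves l)" "qidx r \<in> set (leaves r)" by (rule qidx_in)+
  then have "qidx l \<noteq> qidx r" "qidx l < n" "qidx r < n" using Node.prems by auto
  then have "\<forall>(i,j)\<in>set [gat d l r]. i < n \<and> j < n \<and> i \<noteq> j" by (cases d) (auto simp: gat_def)
  then show ?case using Node by auto
qed simp

lemma tree_mat_sem: "distinct (leaves T) \<Longrightarrow> set (leaves T) \<subseteq> {..<n} \<Longrightarrow>
  sem_mat n (tree_mat n T) (appG (tops T))"
proof -
  assume a: "distinct (leaves T)" "set (leaves T) \<subseteq> {..<n}"
  have "sem_mat n (mat_prod n (rev (map (\<lambda>(i,j). Rmat n i j) (tops T)))) (appG (concat (map (\<lambda>p. [p]) (tops T))))"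
    by (rule sem_mat_prod) (use tops_ok[OF a] Rm_sem in auto)
  moreover have "concat (map (\<lambda>p. [p]) (tops T)) = tops T" by (induction "tops T") auto
  ultimately show ?thesis by (simp add: tree_mat_def node_mats_tops)
qed

definition s0 :: "nat \<Rightarrow> nat \<Rightarrow> bit" where "s0 r c = (if r = c then 1 else 0)"

lemma mat_of_s0: "mat_of n s0 = 1\<^sub>m n"
  by (rule eq_matI) (auto simp: mat_of_def s0_def)

lemma sem_mat_eq: "sem_mat n A F \<Longrightarrow> A = mat_of n (F s0)"
proof -
  assume a: "sem_mat n A F"
  then have "A \<in> carrier_mat n n" by (simp add: sem_mat_def)
  then have "A = A * mat_of n s0" by (simp add: mat_of_s0 right_mult_one_mat)
  also have "... = mat_of n (F s0)" using a by (simp add: sem_mat_def)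
  finally show ?thesis .
qed

lemma bit_char2: "\<forall>x::bit. x + x = 0" by simp

lemma pow_clog: "m \<ge> 1 \<Longrightarrow> 2 ^ clog m < 2 * m"
proof (induction m rule: clog.induct)
  case (1 m)
  show ?case
  proof (cases "m \<le> 1")
    case True then show ?thesis using "1.prems" by (simp add: clog.simps)
  next
    case False
    define m' where "m' = (m+1) div 2"
    define c' where "c' = clog m'"
    have IH: "2 ^ c' < 2 * m'" using "1.IH" False unfolding c'_def m'_def by simp
    have cm: "clog m = Suc c'" using False by (simp add: clog.simps[of m] c'_def m'_def)
    have "2 ^ c' < m"
    proof (cases c')
      case 0 then show ?thesis using False by simp
    next
      case (Suc e)
      then have "2 * 2 ^ e < 2 * m'" using IH by simp
      then have "2 ^ e < m'" by simp
      then have "2 * 2 ^ e + 2 \<le> 2 * m'" by simp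
      moreover have "2 * m' \<le> m + 1" by (simp add: m'_def)
      ultimately have "2 * 2 ^ e < m" by linarith
      then show ?thesis using Suc by simp
    qed
    then show ?thesis using cm by simp
  qed
qed

lemma clog_le_log: assumes "n \<ge> (2::nat)" shows "real (clog n) \<le> 2 * log 2 (real n)"
proof -
  have "2 ^ clog n < 2 * n" using pow_clog assms by simp
  then have "(2::real) powr real (clog n) \<le> 2 * real n"
    by (simp add: powr_realpow) (metis of_nat_less_iff of_nat_mult of_nat_numeral of_nat_power less_imp_le)
  then have "real (clog n) \<le> log 2 (2 * real n)" using assms by (subst le_log_iff) auto
  also have "... = 1 + log 2 (real n)" using assms by (simp add: log_mult)
  finally have a: "real (clog n) \<le> 1 + log 2 (real n)" .
  have "log 2 2 \<le> log 2 (real n)" using assms by (subst log_le_cancel_iff) auto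
  then have b: "1 \<le> log 2 (real n)" by simp
  show ?thesis using a b by linarith
qed

lemma Ls_props:
  assumes "\<forall>T\<in>set Ts. cnot_tree n T"
  shows "(\<forall>l\<in>set (concat (map Circ Ts)). lay_ok n l) \<and>
         gates (concat (concat (map Circ Ts))) u = gates (concat (map tops Ts)) (u :: nat \<Rightarrow> bit) \<and>
         length (concat (map Circ Ts)) \<le> length Ts * (clog n * (4 * clog n + 1))"
  using assms
proof (induction Ts arbitrary: u)
  case Nil then show ?case by simp
next
  case (Cons T Ts)
  have t: "distinct (leaves T)" "set (leaves T) \<subseteq> {..<n}" "tsz T = n"
    using Cons.prems by (auto simp: cnot_tree_def tsz_def)
  have IH: "(\<forall>l\<in>set (concat (map Circ Ts)). lay_ok n l) \<and>
         gates (concat (concat (map Circ Ts))) u' = gates (concat (map tops Ts)) u' \<and>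
         length (concat (map Circ Ts)) \<le> length Ts * (clog n * (4 * clog n + 1))" for u' :: "nat \<Rightarrow> bit"
    using Cons by simp
  have o: "\<forall>l\<in>set (Circ T). lay_ok n l" using Circ_ok[OF t(1,2)] by blast
  have sm: "gates (concat (Circ T)) u = gates (tops T) u" by (rule Circ_sem[OF bit_char2 t(1)])
  have ln: "length (Circ T) \<le> clog n * (4 * clog n + 1)" using Circ_len[of T] t(3) by simp
  have i1: "\<forall>l\<in>set (concat (map Circ Ts)). lay_ok n l" using IH[of u] by blast
  have i2: "gates (concat (concat (map Circ Ts))) (gates (tops T) u) = gates (concat (map tops Ts)) (gates (tops T) u)"
    using IH[of "gates (tops T) u"] by blast
  have i3: "length (concat (map Circ Ts)) \<le> length Ts * (clog n * (4 * clog n + 1))" using IH[of u] by blast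
  have p1: "\<forall>l\<in>set (concat (map Circ (T # Ts))). lay_ok n l" using o i1 by auto
  have p2: "gates (concat (concat (map Circ (T # Ts)))) u = gates (concat (map tops (T # Ts))) u"
    using sm i2 by simp
  have p3: "length (concat (map Circ (T # Ts))) \<le> length (T # Ts) * (clog n * (4 * clog n + 1))"
    using ln i3 by simp
  show ?case using p1 p2 p3 by blast
qed

theorem corollary3p6:
  shows "\<exists>C::real. C > 0 \<and>
    (\<forall>n k (Ts :: ctree list) (M :: bit mat). n \<ge> 2 \<and> k \<ge> 1 \<and> length Ts = k \<and>
       (\<forall>T\<in>set Ts. cnot_tree n T) \<and>
       M = mat_prod n (rev (map (tree_mat n) Ts)) \<longrightarrow>
       (\<exists>Ps. (\<forall>P\<in>set Ps. par_elim n P) \<and>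
             real (length Ps) \<le> C * real k * (log 2 (real n))^2 \<and>
             M = mat_prod n Ps))"
proof (intro exI[of _ 20] conjI allI impI)
  show "(20::real) > 0" by simp
  fix n k Ts M
  assume a: "2 \<le> n \<and> 1 \<le> k \<and> length Ts = k \<and> (\<forall>T\<in>set Ts. cnot_tree n T) \<and>
       M = mat_prod n (rev (map (tree_mat n) Ts))"
  then have n2: "n \<ge> 2" and kT: "length Ts = k" and ct: "\<forall>T\<in>set Ts. cnot_tree n T"
    and M: "M = mat_prod n (rev (map (tree_mat n) Ts))" by auto
  define Ls where "Ls = concat (map Circ Ts)"
  define Ps where "Ps = rev (map (Pm n) Ls)"
  have LP: "(\<forall>l\<in>set Ls. lay_ok n l) \<and> (\<forall>u. gates (concat Ls) u = gates (concat (map tops Ts)) (u :: nat \<Rightarrow> bit)) \<and>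
         length Ls \<le> length Ts * (clog n * (4 * clog n + 1))"
    using Ls_props[OF ct] unfolding Ls_def by blast
  show "\<exists>Ps. (\<forall>P\<in>set Ps. par_elim n P) \<and> real (length Ps) \<le> 20 * real k * (log 2 (real n))^2 \<and> M = mat_prod n Ps"
  proof (intro exI[of _ Ps] conjI)
    show "\<forall>P\<in>set Ps. par_elim n P"
    proof
      fix P assume "P \<in> set Ps"
      then obtain l where l: "l \<in> set Ls" "P = Pm n l" by (auto simp: Ps_def)
      then have "lay_ok n l" using LP by blast
      then show "par_elim n P" unfolding par_elim_def l(2) lay_ok_def Pm_def
        by (intro exI[of _ l]) (auto simp: lq_def qset_def)
    qed
    have tm: "sem_mat n (mat_prod n (rev (map (tree_mat n) Ts))) (appG (concat (map tops Ts)))"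
      by (rule sem_mat_prod) (use ct tree_mat_sem in \<open>auto simp: cnot_tree_def\<close>)
    have pm: "sem_mat n (mat_prod n (rev (map (Pm n) Ls))) (appG (concat (map (\<lambda>l. l) Ls)))"
      by (rule sem_mat_prod) (use LP Pm_sem in auto)
    have "appG (concat Ls) s0 = appG (concat (map tops Ts)) s0"
      using LP by (simp add: appG_def)
    then show "M = mat_prod n Ps"
      using sem_mat_eq[OF tm] sem_mat_eq[OF pm] M by (simp add: Ps_def)
    define c where "c = clog n"
    have "real (length Ps) \<le> real k * (real c * (4 * real c + 1))"
    proof -
      have "length Ps \<le> k * (c * (4 * c + 1))" using LP kT by (simp add: Ps_def c_def)
      then have "real (length Ps) \<le> real (k * (c * (4 * c + 1)))" by (rule of_nat_mono)
      then show ?thesis by (simp add: algebra_simps)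
    qed
    also have "... \<le> real k * (5 * (real c)^2)"
    proof -
      have "real c \<le> (real c)^2" by (cases c) (auto simp: power2_eq_square)
      then have "real c * (4 * real c + 1) \<le> 5 * (real c)^2" by (simp add: power2_eq_square algebra_simps)
      then show ?thesis by (intro mult_left_mono) auto
    qed
    also have "... \<le> real k * (5 * (2 * log 2 (real n))^2)"
    proof -
      have "real c \<le> 2 * log 2 (real n)" unfolding c_def by (rule clog_le_log[OF n2])
      then have "(real c)^2 \<le> (2 * log 2 (real n))^2" by (intro power_mono) auto
      then show ?thesis by (intro mult_left_mono) auto
    qed
    also have "... = 20 * real k * (log 2 (real n))^2" by (simp add: power2_eq_square)
    finally show "real (length Ps) \<le> 20 * real k * (log 2 (real n))^2" .
  qed
qed

end
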